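(* Let $\kappa$ be an algebraically closed field of characteristic zero, complete for a non-trivial non-Archimedean absolute value. Let $a,b\in\kappa$ with $|a|=1$, let $L(z)=az+b$, let $f\in\mathcal{M}(\kappa)$ be a meromorphic function not identically zero, and let $m$ be a positive integer. Then for every $r>|b|$, $$m\!\left(r,\frac{f\circ L}{f}\right)=0,\qquad m\!\left(r,\frac{\Delta_L^mf}{f}\right)=0.$$
   Context: $\mathcal{M}(\kappa)$ is the field of meromorphic functions over $\kappa$ (quotients $g/h$ of power series converging on all of $\kappa$). For entire $g=\sum a_nz^n$, $\mu(r,g)=\max_n|a_n|r^n$; $\mu(r,g/h)=\mu(r,g)/\mu(r,h)$; $m(r,F)=\log^+\mu(r,F)$. $\Delta_Lf=f\circ L-f$, $\Delta_L^mf=\Delta_L(\Delta_L^{m-1}f)$. *)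

theory Defs
  imports Complex_Main "HOL-Computational_Algebra.Polynomial"
begin

definition nonarch_absv :: "('a::field \<Rightarrow> real) \<Rightarrow> bool" where
  "nonarch_absv absv \<longleftrightarrow>
     (\<forall>x. 0 \<le> absv x) \<and> (\<forall>x. absv x = 0 \<longleftrightarrow> x = 0) \<and>
     (\<forall>x y. absv (x * y) = absv x * absv y) \<and>
     (\<forall>x y. absv (x + y) \<le> max (absv x) (absv y))"

definition nontrivial_absv :: "('a::field \<Rightarrow> real) \<Rightarrow> bool" where
  "nontrivial_absv absv \<longleftrightarrow> (\<exists>x. x \<noteq> 0 \<and> absv x \<noteq> 1)"

definition conv_absv :: "('a::field \<Rightarrow> real) \<Rightarrow> (nat \<Rightarrow> 'a) \<Rightarrow> 'a \<Rightarrow> bool" where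
  "conv_absv absv X s \<longleftrightarrow> (\<forall>e>0. \<exists>N. \<forall>n\<ge>N. absv (X n - s) < e)"

definition cauchy_absv :: "('a::field \<Rightarrow> real) \<Rightarrow> (nat \<Rightarrow> 'a) \<Rightarrow> bool" where
  "cauchy_absv absv X \<longleftrightarrow> (\<forall>e>0. \<exists>N. \<forall>m\<ge>N. \<forall>n\<ge>N. absv (X m - X n) < e)"

definition complete_absv :: "('a::field \<Rightarrow> real) \<Rightarrow> bool" where
  "complete_absv absv \<longleftrightarrow> (\<forall>X. cauchy_absv absv X \<longrightarrow> (\<exists>s. conv_absv absv X s))"

definition alg_closed :: "'a::field itself \<Rightarrow> bool" where
  "alg_closed _ \<longleftrightarrow> (\<forall>p :: 'a poly. 0 < degree p \<longrightarrow> (\<exists>x. poly p x = 0))"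

text \<open>kappa: algebraically closed, complete for a nontrivial non-Archimedean absolute value
  (characteristic zero is imposed via the type class field_char_0).\<close>

definition kappa_field :: "('a::field \<Rightarrow> real) \<Rightarrow> bool" where
  "kappa_field absv \<longleftrightarrow> nonarch_absv absv \<and> nontrivial_absv absv \<and>
      complete_absv absv \<and> alg_closed TYPE('a)"

text \<open>An entire function is a power series (coefficient sequence) converging on all of kappa,
  i.e. absv (c n) * r ^ n tends to 0 for every r > 0.\<close>

definition entire :: "('a::field \<Rightarrow> real) \<Rightarrow> (nat \<Rightarrow> 'a) \<Rightarrow> bool" where
  "entire absv c \<longleftrightarrow> (\<forall>r>0. (\<lambda>n. absv (c n) * r ^ n) \<longlonglongrightarrow> 0)"

definition eval_ps :: "('a::field \<Rightarrow> real) \<Rightarrow> (nat \<Rightarrow> 'a) \<Rightarrow> 'a \<Rightarrow> 'a" where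
  "eval_ps absv c z = (THE s. conv_absv absv (\<lambda>N. \<Sum>n<N. c n * z ^ n) s)"

definition mu_ent :: "('a::field \<Rightarrow> real) \<Rightarrow> real \<Rightarrow> (nat \<Rightarrow> 'a) \<Rightarrow> real" where
  "mu_ent absv r c = (SUP n. absv (c n) * r ^ n)"

text \<open>The pair (g,h) of entire functions, h not identically zero, represents the
  meromorphic function F = g/h: F agrees with g/h wherever h does not vanish.\<close>

definition mero_rep :: "('a::field \<Rightarrow> real) \<Rightarrow> ('a \<Rightarrow> 'a) \<Rightarrow> (nat \<Rightarrow> 'a) \<Rightarrow> (nat \<Rightarrow> 'a) \<Rightarrow> bool" where
  "mero_rep absv F g h \<longleftrightarrow> entire absv g \<and> entire absv h \<and> (\<exists>n. h n \<noteq> 0) \<and>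
     (\<forall>z. eval_ps absv h z \<noteq> 0 \<longrightarrow> F z = eval_ps absv g z / eval_ps absv h z)"

text \<open>mu(r, g/h) = mu(r,g) / mu(r,h) (independent of the representation).\<close>

definition mu_mero :: "('a::field \<Rightarrow> real) \<Rightarrow> real \<Rightarrow> ('a \<Rightarrow> 'a) \<Rightarrow> real" where
  "mu_mero absv r F = (SOME v. \<exists>g h. mero_rep absv F g h \<and> v = mu_ent absv r g / mu_ent absv r h)"

definition m_prox :: "('a::field \<Rightarrow> real) \<Rightarrow> real \<Rightarrow> ('a \<Rightarrow> 'a) \<Rightarrow> real" where
  "m_prox absv r F = max 0 (ln (mu_mero absv r F))"

definition delta_L :: "('a \<Rightarrow> 'a) \<Rightarrow> ('a \<Rightarrow> 'a::ab_group_add) \<Rightarrow> 'a \<Rightarrow> 'a" where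
  "delta_L L f = (\<lambda>z. f (L z) - f z)"

end

theory Submission
  imports Defs
begin

definition cmul :: "(nat \<Rightarrow> 'a::field) \<Rightarrow> (nat \<Rightarrow> 'a) \<Rightarrow> nat \<Rightarrow> 'a" where
  "cmul c d = (\<lambda>k. \<Sum>i\<le>k. c i * d (k - i))"
definition cadd :: "(nat \<Rightarrow> 'a::field) \<Rightarrow> (nat \<Rightarrow> 'a) \<Rightarrow> nat \<Rightarrow> 'a" where
  "cadd c d = (\<lambda>k. c k + d k)"
definition csc :: "'a::field \<Rightarrow> (nat \<Rightarrow> 'a) \<Rightarrow> nat \<Rightarrow> 'a" where
  "csc x c = (\<lambda>k. x * c k)"
definition cone :: "nat \<Rightarrow> 'a::field" where
  "cone = (\<lambda>k. if k = 0 then 1 else 0)"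
definition trunc :: "(nat \<Rightarrow> 'a::field) \<Rightarrow> nat \<Rightarrow> nat \<Rightarrow> 'a" where
  "trunc c N = (\<lambda>k. if k < N then c k else 0)"

lemma poly_sum_coeff: fixes p :: "'a::field poly" assumes "\<And>k. k \<ge> K \<Longrightarrow> coeff p k = 0"
  shows "poly p z = (\<Sum>k<K. coeff p k * z ^ k)"
proof (cases "degree p < K")
  case True
  have "poly p z = (\<Sum>k\<le>degree p. coeff p k * z ^ k)" by (rule poly_altdef)
  also have "\<dots> = (\<Sum>k<K. coeff p k * z ^ k)"
    by (rule sum.mono_neutral_left) (use True le_degree in auto)
  finally show ?thesis .
next
  case False
  then have "lead_coeff p = 0" using assms by simp
  then have "p = 0" by simp
  then show ?thesis by simp
qed

lemma coeff_trunc_poly: "coeff (Poly (map c [0..<N])) = trunc c N"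
  by (rule ext) (simp add: nth_default_def trunc_def)

lemma trunc_prod_identity:
  "(\<Sum>k<2*N. cmul (trunc c N) (trunc d N) k * z ^ k) = (\<Sum>k<N. c k * z ^ k) * (\<Sum>k<N. d k * z ^ k)"
proof -
  let ?P = "Poly (map c [0..<N])" and ?Q = "Poly (map d [0..<N])"
  have pc: "poly ?P z = (\<Sum>k<N. c k * z ^ k)"
    by (subst poly_sum_coeff[of N]) (auto simp: nth_default_def)
  have pd: "poly ?Q z = (\<Sum>k<N. d k * z ^ k)"
    by (subst poly_sum_coeff[of N]) (auto simp: nth_default_def)
  have cm: "coeff (?P * ?Q) k = cmul (trunc c N) (trunc d N) k" for k
    by (simp add: coeff_mult cmul_def coeff_trunc_poly del: coeff_Poly_eq)
  have z: "coeff (?P * ?Q) k = 0" if "k \<ge> 2*N" for k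
    unfolding cm cmul_def trunc_def using that by (intro sum.neutral) auto
  have "poly (?P * ?Q) z = (\<Sum>k<2*N. coeff (?P * ?Q) k * z ^ k)" by (rule poly_sum_coeff) (rule z)
  then show ?thesis using pc pd cm by simp
qed

lemma binom_swap:
  fixes c :: "nat \<Rightarrow> 'a::field"
  shows "(\<Sum>k<N. (a ^ k * (\<Sum>n<N. c n * of_nat (n choose k) * b ^ (n - k))) * z ^ k) =
         (\<Sum>n<N. c n * (a * z + b) ^ n)"
proof -
  have e: "(a * z + b) ^ n = (\<Sum>k<N. of_nat (n choose k) * (a * z) ^ k * b ^ (n - k))" if "n < N" for n
  proof -
    have "(a * z + b) ^ n = (\<Sum>k\<le>n. of_nat (n choose k) * (a * z) ^ k * b ^ (n - k))"
      by (rule binomial_ring)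
    also have "\<dots> = (\<Sum>k<N. of_nat (n choose k) * (a * z) ^ k * b ^ (n - k))"
      by (rule sum.mono_neutral_left) (use that in \<open>auto simp: binomial_eq_0\<close>)
    finally show ?thesis .
  qed
  have "(\<Sum>n<N. c n * (a * z + b) ^ n) = (\<Sum>n<N. \<Sum>k<N. c n * (of_nat (n choose k) * (a * z) ^ k * b ^ (n - k)))"
    by (rule sum.cong) (auto simp: e sum_distrib_left)
  also have "\<dots> = (\<Sum>k<N. \<Sum>n<N. c n * (of_nat (n choose k) * (a * z) ^ k * b ^ (n - k)))"
    by (rule sum.swap)
  also have "\<dots> = (\<Sum>k<N. (a ^ k * (\<Sum>n<N. c n * of_nat (n choose k) * b ^ (n - k))) * z ^ k)"
    by (rule sum.cong) (auto simp: sum_distrib_left sum_distrib_right power_mult_distrib mult_ac)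
  finally show ?thesis by simp
qed

primrec cprod :: "(nat \<Rightarrow> nat \<Rightarrow> 'a::field) \<Rightarrow> nat \<Rightarrow> nat \<Rightarrow> 'a" where
  "cprod S 0 = cone"
| "cprod S (Suc n) = cmul (cprod S n) (S n)"

primrec csum :: "(nat \<Rightarrow> nat \<Rightarrow> 'a::field) \<Rightarrow> nat \<Rightarrow> nat \<Rightarrow> 'a" where
  "csum S 0 = (\<lambda>k. 0)"
| "csum S (Suc n) = cadd (csum S n) (S n)"

lemma L_pow: "((\<lambda>z. a * z + b) ^^ k) z = a ^ k * z + (\<Sum>j<k. a ^ j) * (b::'a::field)"
proof (induction k)
  case (Suc k)
  have "((\<lambda>z. a * z + b) ^^ Suc k) z = a * (a ^ k * z + (\<Sum>j<k. a ^ j) * b) + b" using Suc by simp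
  also have "\<dots> = a ^ Suc k * z + (\<Sum>j<Suc k. a ^ j) * b"
  proof -
    have s: "(\<Sum>j<Suc k. a ^ j) = 1 + a * (\<Sum>j<k. a ^ j)"
      by (subst sum.lessThan_Suc_shift) (simp add: sum_distrib_left)
    show ?thesis unfolding s by (simp add: algebra_simps)
  qed
  finally show ?case .
qed simp

lemma delta_pow: "\<exists>w::nat \<Rightarrow> int. \<forall>z. (delta_L L ^^ m) f z = (\<Sum>k\<le>m. of_int (w k) * f ((L ^^ k) z))"
proof (induction m)
  case 0
  show ?case by (intro exI[of _ "\<lambda>k. 1"]) simp
next
  case (Suc m)
  then obtain w where w: "\<forall>z. (delta_L L ^^ m) f z = (\<Sum>k\<le>m. of_int (w k) * f ((L ^^ k) z))" by blast
  define w' where "w' = (\<lambda>k. (if k = 0 then 0 else w (k - 1)) - (if k \<le> m then w k else 0))"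
  have "(delta_L L ^^ Suc m) f z = (\<Sum>k\<le>Suc m. of_int (w' k) * f ((L ^^ k) z))" for z
  proof -
    have "(delta_L L ^^ Suc m) f z = (delta_L L ^^ m) f (L z) - (delta_L L ^^ m) f z"
      by (simp add: delta_L_def)
    also have "\<dots> = (\<Sum>k\<le>m. of_int (w k) * f ((L ^^ Suc k) z)) - (\<Sum>k\<le>m. of_int (w k) * f ((L ^^ k) z))"
      using w by (simp add: funpow_swap1)
    also have "(\<Sum>k\<le>m. of_int (w k) * f ((L ^^ Suc k) z)) =
        (\<Sum>k\<le>Suc m. of_int (if k = 0 then 0 else w (k - 1)) * f ((L ^^ k) z))"
      by (subst sum.atMost_Suc_shift) simp
    also have "(\<Sum>k\<le>m. of_int (w k) * f ((L ^^ k) z)) =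
        (\<Sum>k\<le>Suc m. of_int (if k \<le> m then w k else 0) * f ((L ^^ k) z))"
      by (subst sum.atMost_Suc) simp
    finally show ?thesis unfolding w'_def by (simp add: sum_subtractf left_diff_distrib)
  qed
  then show ?case by blast
qed

lemma prod_if_one: fixes x :: "nat \<Rightarrow> 'a::field"
  assumes "k \<in> S" "finite S" "x k \<noteq> 0"
  shows "(\<Prod>j\<in>S. if j = k then 1 else x j) = (\<Prod>j\<in>S. x j) / x k"
proof -
  have "(\<Prod>j\<in>S. if j = k then 1 else x j) = (if k = k then 1 else x k) * (\<Prod>j\<in>S - {k}. if j = k then 1 else x j)"
    using assms by (subst prod.remove[of _ k]) auto
  also have "\<dots> = (\<Prod>j\<in>S - {k}. x j)" by simp
  also have "\<dots> = (\<Prod>j\<in>S. x j) / x k"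
    using assms by (subst prod.remove[of _ k]) auto
  finally show ?thesis .
qed

lemma prod_if_const_low: "n \<le> k \<Longrightarrow> (\<Prod>j<n. if j = k then 1 else (c::real)) = c ^ n"
  by (induction n) auto

lemma prod_if_const: "k \<le> m \<Longrightarrow> (\<Prod>j<Suc m. if j = k then 1 else (c::real)) * c = c ^ Suc m"
proof (induction m)
  case 0 then show ?case by simp
next
  case (Suc m)
  show ?case
  proof (cases "k \<le> m")
    case True then show ?thesis using Suc by (simp add: mult_ac)
  next
    case False
    then have "k = Suc m" using Suc.prems by simp
    then show ?thesis using prod_if_const_low[of "Suc m" k c] by simp
  qed
qed

locale NA =
  fixes A :: "'a::field \<Rightarrow> real"
  assumes na: "nonarch_absv A" and cpl: "complete_absv A" and ntr: "nontrivial_absv A"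
begin

lemma A_nonneg[simp]: "0 \<le> A x" using na unfolding nonarch_absv_def by blast
lemma A_eq_0[simp]: "A x = 0 \<longleftrightarrow> x = 0" using na unfolding nonarch_absv_def by blast
lemma A_mult[simp]: "A (x * y) = A x * A y" using na unfolding nonarch_absv_def by blast
lemma A_ultra: "A (x + y) \<le> max (A x) (A y)" using na unfolding nonarch_absv_def by blast
lemma A_0[simp]: "A 0 = 0" by simp
lemma A_pos[simp]: "0 < A x \<longleftrightarrow> x \<noteq> 0" using A_nonneg[of x] A_eq_0[of x] by linarith
lemma A_1[simp]: "A 1 = 1"
proof -
  have "A 1 = A 1 * A 1" using A_mult[of 1 1] by simp
  moreover have "A 1 \<noteq> 0" by simp
  ultimately show ?thesis by (metis mult_cancel_right2)
qed
lemma A_m1[simp]: "A (-1) = 1"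
proof -
  have "A (-1) * A (-1) = 1" using A_mult[of "-1" "-1"] by simp
  then have "(A (-1) - 1) * (A (-1) + 1) = 0" by (simp add: algebra_simps)
  moreover have "A (-1) + 1 > 0" using A_nonneg[of "-1"] by linarith
  ultimately show ?thesis by simp
qed
lemma A_minus[simp]: "A (- x) = A x"
  using A_mult[of "-1" x] by simp
lemma A_power[simp]: "A (x ^ n) = A x ^ n"
  by (induction n) auto
lemma A_inverse[simp]: "A (inverse x) = inverse (A x)"
proof (cases "x = 0")
  case False
  then have "A x * A (inverse x) = 1" using A_mult[of x "inverse x"] by (simp del: A_mult)
  then show ?thesis by (metis inverse_unique)
qed simp
lemma A_divide[simp]: "A (x / y) = A x / A y"
  by (simp add: divide_inverse)
lemma A_diff: "A (x - y) \<le> max (A x) (A y)"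
  using A_ultra[of x "-y"] by simp
lemma A_commute: "A (x - y) = A (y - x)"
  by (metis A_minus minus_diff_eq)
lemma A_add_le: "A x \<le> B \<Longrightarrow> A y \<le> B \<Longrightarrow> A (x + y) \<le> B"
  using A_ultra[of x y] by simp
lemma A_diff_le: "A x \<le> B \<Longrightarrow> A y \<le> B \<Longrightarrow> A (x - y) \<le> B"
  using A_diff[of x y] by simp
lemma A_sum_le: "(\<And>i. i \<in> S \<Longrightarrow> A (f i) \<le> B) \<Longrightarrow> 0 \<le> B \<Longrightarrow> A (sum f S) \<le> B"
proof (induction S rule: infinite_finite_induct)
  case (insert x F)
  then show ?case by (simp add: A_add_le)
qed auto
lemma A_of_nat: "A (of_nat n) \<le> 1"
  by (induction n) (auto intro: A_add_le)
lemma A_of_int: "A (of_int n) \<le> 1"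
  by (cases "n \<ge> 0") (metis A_of_nat of_int_of_nat_eq nonneg_int_cases A_minus of_int_minus
      neg_0_le_iff_le nle_le)+
lemma A_strict: "A y < A x \<Longrightarrow> A (x + y) = A x"
proof -
  assume h: "A y < A x"
  have 1: "A (x + y) \<le> A x" using A_ultra[of x y] h by simp
  have "A x \<le> max (A (x + y)) (A y)" using A_diff[of "x+y" y] by simp
  then have "A x \<le> A (x + y)" using h by auto
  with 1 show ?thesis by simp
qed
lemma A_small: "\<exists>t. 0 < A t \<and> A t < 1"
proof -
  obtain x where x: "x \<noteq> 0" "A x \<noteq> 1" using ntr unfolding nontrivial_absv_def by blast
  show ?thesis
  proof (cases "A x < 1")
    case True then show ?thesis using x by (intro exI[of _ x]) simp
  next
    case False
    then have "A x > 1" using x by simp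
    then show ?thesis using x by (intro exI[of _ "inverse x"]) (simp add: inverse_less_1_iff)
  qed
qed

lemma le_eps: "(\<And>e. e > 0 \<Longrightarrow> (x::real) \<le> B + e) \<Longrightarrow> x \<le> B"
  by (metis field_le_epsilon)

lemma conv_unique: assumes "conv_absv A X s" "conv_absv A X t" shows "s = t"
proof -
  have "A (s - t) \<le> 0 + e" if "e > 0" for e
  proof -
    obtain N1 where N1: "\<forall>n\<ge>N1. A (X n - s) < e" using assms(1) \<open>e>0\<close> unfolding conv_absv_def by blast
    obtain N2 where N2: "\<forall>n\<ge>N2. A (X n - t) < e" using assms(2) \<open>e>0\<close> unfolding conv_absv_def by blast
    let ?n = "max N1 N2"
    have "s - t = (X ?n - t) - (X ?n - s)" by simp
    then have "A (s - t) \<le> max (A (X ?n - t)) (A (X ?n - s))" using A_diff by metis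
    then show ?thesis using N1[rule_format, of ?n] N2[rule_format, of ?n] by auto
  qed
  then have "A (s - t) \<le> 0" by (rule le_eps)
  then show ?thesis using A_nonneg[of "s-t"] by simp
qed

lemma conv_eventually_const: "\<forall>n\<ge>N. X n = s \<Longrightarrow> conv_absv A X s"
  unfolding conv_absv_def by (intro allI impI exI[of _ N]) simp

lemma conv_add: assumes "conv_absv A X s" "conv_absv A Y t"
  shows "conv_absv A (\<lambda>n. X n + Y n) (s + t)"
  unfolding conv_absv_def
proof (intro allI impI)
  fix e :: real assume "e > 0"
  obtain N1 where N1: "\<forall>n\<ge>N1. A (X n - s) < e" using assms(1) \<open>e>0\<close> unfolding conv_absv_def by blast
  obtain N2 where N2: "\<forall>n\<ge>N2. A (Y n - t) < e" using assms(2) \<open>e>0\<close> unfolding conv_absv_def by blast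
  have "A (X n + Y n - (s + t)) < e" if "n \<ge> max N1 N2" for n
  proof -
    have e: "X n + Y n - (s + t) = (X n - s) + (Y n - t)" by simp
    show ?thesis unfolding e using A_ultra[of "X n - s" "Y n - t"] N1[rule_format, of n] N2[rule_format, of n] that by auto
  qed
  then show "\<exists>N. \<forall>n\<ge>N. A (X n + Y n - (s + t)) < e" by blast
qed

lemma conv_cmult: assumes "conv_absv A X s"
  shows "conv_absv A (\<lambda>n. c * X n) (c * s)"
proof (cases "c = 0")
  case True then show ?thesis unfolding conv_absv_def by simp
next
  case False
  show ?thesis unfolding conv_absv_def
  proof (intro allI impI)
    fix e :: real assume "e > 0"
    then have "e / A c > 0" using False by simp
    then obtain N where N: "\<forall>n\<ge>N. A (X n - s) < e / A c" using assms unfolding conv_absv_def by blast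
    have "A (c * X n - c * s) < e" if "n \<ge> N" for n
    proof -
      have "A (c * X n - c * s) = A c * A (X n - s)" by (simp add: right_diff_distrib[symmetric])
      also have "\<dots> < A c * (e / A c)" using N that False by (intro mult_strict_left_mono) auto
      finally show ?thesis using False by simp
    qed
    then show "\<exists>N. \<forall>n\<ge>N. A (c * X n - c * s) < e" by blast
  qed
qed

lemma conv_neg: "conv_absv A X s \<Longrightarrow> conv_absv A (\<lambda>n. - X n) (- s)"
  using conv_cmult[of X s "-1"] by simp

lemma conv_diff: "conv_absv A X s \<Longrightarrow> conv_absv A Y t \<Longrightarrow> conv_absv A (\<lambda>n. X n - Y n) (s - t)"
  using conv_add[of X s "\<lambda>n. - Y n" "-t"] conv_neg[of Y t] by simp

lemma conv_bounded: assumes "conv_absv A X s" shows "\<exists>B. \<forall>n. A (X n) \<le> B"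
proof -
  obtain N where N: "\<forall>n\<ge>N. A (X n - s) < 1" using assms unfolding conv_absv_def by force
  define B where "B = max (max 1 (A s)) (Max ((\<lambda>n. A (X n)) ` {..N}))"
  have "A (X n) \<le> B" for n
  proof (cases "n \<le> N")
    case True then show ?thesis unfolding B_def by (auto intro: max.coboundedI2)
  next
    case False
    have "X n = (X n - s) + s" by simp
    then have "A (X n) \<le> max (A (X n - s)) (A s)" by (metis A_ultra)
    then have "A (X n) \<le> max 1 (A s)" using N[rule_format, of n] False by auto
    then show ?thesis unfolding B_def by auto
  qed
  then show ?thesis by blast
qed

lemma conv_mult: assumes "conv_absv A X s" "conv_absv A Y t"
  shows "conv_absv A (\<lambda>n. X n * Y n) (s * t)"
  unfolding conv_absv_def
proof (intro allI impI)
  fix e :: real assume "e > 0"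
  obtain B where B: "\<forall>n. A (X n) \<le> B" using conv_bounded[OF assms(1)] by blast
  define C where "C = max 1 (max B (A t))"
  have C: "C > 0" "B \<le> C" "A t \<le> C" unfolding C_def by auto
  obtain N1 where N1: "\<forall>n\<ge>N1. A (X n - s) < e / C" using assms(1) \<open>e>0\<close> C unfolding conv_absv_def by force
  obtain N2 where N2: "\<forall>n\<ge>N2. A (Y n - t) < e / C" using assms(2) \<open>e>0\<close> C unfolding conv_absv_def by force
  have "A (X n * Y n - s * t) < e" if "n \<ge> max N1 N2" for n
  proof -
    have eq: "X n * Y n - s * t = X n * (Y n - t) + t * (X n - s)" by (simp add: algebra_simps)
    have 1: "A (X n * (Y n - t)) < e"
    proof -
      have "A (X n * (Y n - t)) = A (X n) * A (Y n - t)" by simp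
      also have "\<dots> \<le> C * A (Y n - t)" using B C by (intro mult_right_mono) (auto intro: order_trans)
      also have "\<dots> < C * (e / C)" using N2 that C by (intro mult_strict_left_mono) auto
      finally show ?thesis using C by simp
    qed
    have 2: "A (t * (X n - s)) < e"
    proof -
      have "A (t * (X n - s)) = A t * A (X n - s)" by simp
      also have "\<dots> \<le> C * A (X n - s)" using C by (intro mult_right_mono) auto
      also have "\<dots> < C * (e / C)" using N1 that C by (intro mult_strict_left_mono) auto
      finally show ?thesis using C by simp
    qed
    show ?thesis using eq 1 2 A_ultra[of "X n * (Y n - t)" "t * (X n - s)"] by auto
  qed
  then show "\<exists>N. \<forall>n\<ge>N. A (X n * Y n - s * t) < e" by blast
qed

definition ssum :: "(nat \<Rightarrow> 'a) \<Rightarrow> 'a" where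
  "ssum x = (THE s. conv_absv A (\<lambda>N. \<Sum>n<N. x n) s)"

lemma ssum_eqI: "conv_absv A (\<lambda>N. \<Sum>n<N. x n) s \<Longrightarrow> ssum x = s"
  unfolding ssum_def using conv_unique by blast

lemma partial_diff: fixes x :: "nat \<Rightarrow> 'a" shows "m \<le> n \<Longrightarrow> (\<Sum>k<n. x k) - (\<Sum>k<m. x k) = (\<Sum>k\<in>{m..<n}. x k)"
  using sum_diff_nat_ivl[where f=x and m=0 and n=m and p=n] by (simp add: atLeast0LessThan)

lemma conv_ssum: assumes "(\<lambda>n. A (x n)) \<longlonglongrightarrow> 0"
  shows "conv_absv A (\<lambda>N. \<Sum>n<N. x n) (ssum x)"
proof -
  have "cauchy_absv A (\<lambda>N. \<Sum>n<N. x n)"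
    unfolding cauchy_absv_def
  proof (intro allI impI)
    fix e :: real assume "e > 0"
    then have "e/2 > 0" by simp
    from assms[THEN order_tendstoD(2), OF this] obtain N where N: "\<forall>n\<ge>N. A (x n) < e/2"
      by (auto simp: eventually_sequentially)
    have key: "A ((\<Sum>k<n. x k) - (\<Sum>k<m. x k)) \<le> e/2" if "N \<le> m" "m \<le> n" for m n
    proof -
      have "A (sum x {m..<n}) \<le> e/2"
      proof (rule A_sum_le)
        fix i assume "i \<in> {m..<n}"
        then have "i \<ge> N" using that by auto
        then show "A (x i) \<le> e/2" using N by (simp add: less_imp_le)
      qed (use \<open>e>0\<close> in auto)
      then show ?thesis by (simp add: partial_diff that)
    qed
    have "A ((\<Sum>k<m. x k) - (\<Sum>k<n. x k)) < e" if "m \<ge> N" "n \<ge> N" for m n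
    proof (cases "m \<le> n")
      case True
      have "A ((\<Sum>k<m. x k) - (\<Sum>k<n. x k)) = A ((\<Sum>k<n. x k) - (\<Sum>k<m. x k))" by (rule A_commute)
      then show ?thesis using key[of m n] that True \<open>e>0\<close> by linarith
    next
      case False then show ?thesis using key[of n m] that \<open>e>0\<close> by auto
    qed
    then show "\<exists>N. \<forall>m\<ge>N. \<forall>n\<ge>N. A ((\<Sum>k<m. x k) - (\<Sum>k<n. x k)) < e" by blast
  qed
  then obtain s where "conv_absv A (\<lambda>N. \<Sum>n<N. x n) s" using cpl unfolding complete_absv_def by blast
  then show ?thesis using ssum_eqI by metis
qed

lemma tail_bound: assumes "conv_absv A (\<lambda>N. \<Sum>n<N. x n) s" "\<And>n. n \<ge> N \<Longrightarrow> A (x n) \<le> B"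
  shows "A (s - (\<Sum>n<N. x n)) \<le> B"
proof (rule le_eps)
  fix e :: real assume "e > 0"
  obtain M where M: "\<forall>n\<ge>M. A ((\<Sum>k<n. x k) - s) < e" using assms(1) \<open>e>0\<close> unfolding conv_absv_def by blast
  let ?M = "max M N"
  have "s - (\<Sum>n<N. x n) = (s - (\<Sum>k<?M. x k)) + ((\<Sum>k<?M. x k) - (\<Sum>n<N. x n))" by simp
  then have "A (s - (\<Sum>n<N. x n)) \<le> max (A (s - (\<Sum>k<?M. x k))) (A ((\<Sum>k<?M. x k) - (\<Sum>n<N. x n)))"
    by (metis A_ultra)
  moreover have "A (s - (\<Sum>k<?M. x k)) < e" using M A_commute by (metis max.cobounded1)
  moreover have "A ((\<Sum>k<?M. x k) - (\<Sum>n<N. x n)) \<le> B"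
  proof (cases "B \<ge> 0")
    case True then show ?thesis using assms(2) by (subst partial_diff) (auto intro!: A_sum_le)
  next
    case False then show ?thesis using assms(2)[of N] A_nonneg[of "x N"] by simp
  qed
  moreover have "0 \<le> B" using calculation(3) A_nonneg order_trans by blast
  ultimately show "A (s - (\<Sum>n<N. x n)) \<le> B + e"
    using \<open>e>0\<close> by (smt (verit) max_def)
qed

lemma ssum_bound: "(\<lambda>n. A (x n)) \<longlonglongrightarrow> 0 \<Longrightarrow> (\<And>n. A (x n) \<le> B) \<Longrightarrow> A (ssum x) \<le> B"
  using tail_bound[OF conv_ssum, of x 0 B] by simp

lemma ev_ssum: "eval_ps A c z = ssum (\<lambda>n. c n * z ^ n)"
  unfolding eval_ps_def ssum_def ..

lemma entire_bdd: "entire A c \<longleftrightarrow> (\<forall>r>0. \<exists>B. \<forall>n. A (c n) * r ^ n \<le> B)"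
proof
  assume h: "entire A c"
  show "\<forall>r>0. \<exists>B. \<forall>n. A (c n) * r ^ n \<le> B"
  proof (intro allI impI)
    fix r :: real assume "r > 0"
    then have "(\<lambda>n. A (c n) * r ^ n) \<longlonglongrightarrow> 0" using h unfolding entire_def by blast
    then have "Bseq (\<lambda>n. A (c n) * r ^ n)" by (rule convergent_imp_Bseq[OF convergentI])
    then obtain K where "\<forall>n. norm (A (c n) * r ^ n) \<le> K" unfolding Bseq_def by blast
    then show "\<exists>B. \<forall>n. A (c n) * r ^ n \<le> B" by (metis abs_ge_self order_trans real_norm_def)
  qed
next
  assume h: "\<forall>r>0. \<exists>B. \<forall>n. A (c n) * r ^ n \<le> B"
  show "entire A c" unfolding entire_def
  proof (intro allI impI)
    fix r :: real assume r: "r > 0"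
    then obtain B where B: "\<forall>n. A (c n) * (2*r) ^ n \<le> B" using h by (meson mult_pos_pos zero_less_numeral)
    have lim: "(\<lambda>n. B * inverse (2 ^ n)) \<longlonglongrightarrow> 0"
      by (rule tendsto_mult_right_zero, rule LIMSEQ_inverse_realpow_zero) simp
    show "(\<lambda>n. A (c n) * r ^ n) \<longlonglongrightarrow> 0"
    proof (rule tendsto_sandwich[OF _ _ tendsto_const lim])
      show "\<forall>\<^sub>F n in sequentially. 0 \<le> A (c n) * r ^ n" using r by simp
      show "\<forall>\<^sub>F n in sequentially. A (c n) * r ^ n \<le> B * inverse (2 ^ n)"
      proof (rule always_eventually, rule allI)
        fix n
        have "A (c n) * r ^ n = (A (c n) * (2*r) ^ n) * inverse (2 ^ n)"
          by (simp add: power_mult_distrib)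
        also have "\<dots> \<le> B * inverse (2 ^ n)" using B by (intro mult_right_mono) auto
        finally show "A (c n) * r ^ n \<le> B * inverse (2 ^ n)" .
      qed
    qed
  qed
qed

lemma entire_terms: assumes "entire A c" and "A z \<le> r" and "r > 0"
  shows "(\<lambda>n. A (c n * z ^ n)) \<longlonglongrightarrow> 0"
proof (rule tendsto_sandwich[OF _ _ tendsto_const])
  show "(\<lambda>n. A (c n) * r ^ n) \<longlonglongrightarrow> 0" using assms unfolding entire_def by blast
  show "\<forall>\<^sub>F n in sequentially. 0 \<le> A (c n * z ^ n)" by simp
  show "\<forall>\<^sub>F n in sequentially. A (c n * z ^ n) \<le> A (c n) * r ^ n"
  proof (rule always_eventually, rule allI)
    fix n
    have "A z ^ n \<le> r ^ n" by (rule power_mono) (use assms in auto)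
    then show "A (c n * z ^ n) \<le> A (c n) * r ^ n" by (simp add: mult_left_mono)
  qed
qed

lemma entire_terms': "entire A c \<Longrightarrow> (\<lambda>n. A (c n * z ^ n)) \<longlonglongrightarrow> 0"
  using entire_terms[of c z "A z + 1"] by (simp add: add_nonneg_pos)

lemma conv_ev: "entire A c \<Longrightarrow> conv_absv A (\<lambda>N. \<Sum>n<N. c n * z ^ n) (eval_ps A c z)"
  unfolding ev_ssum by (rule conv_ssum[OF entire_terms'])

lemma ev_bound: "entire A c \<Longrightarrow> (\<And>n. A (c n) * A z ^ n \<le> B) \<Longrightarrow> A (eval_ps A c z) \<le> B"
  unfolding ev_ssum by (rule ssum_bound[OF entire_terms']) auto

section \<open>Gauss norm\<close>

lemma mu_bdd: assumes "entire A c" "r > 0" shows "bdd_above (range (\<lambda>n. A (c n) * r ^ n))"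
  using assms entire_bdd unfolding bdd_above_def by fastforce

lemma mu_upper: "entire A c \<Longrightarrow> r > 0 \<Longrightarrow> A (c n) * r ^ n \<le> mu_ent A r c"
  unfolding mu_ent_def by (rule cSUP_upper[OF _ mu_bdd]) auto

lemma mu_least: "(\<And>n. A (c n) * r ^ n \<le> B) \<Longrightarrow> mu_ent A r c \<le> B"
  unfolding mu_ent_def by (rule cSUP_least) auto

lemma mu_nonneg: "entire A c \<Longrightarrow> r > 0 \<Longrightarrow> 0 \<le> mu_ent A r c"
proof -
  assume "entire A c" "r > 0"
  then have "A (c 0) * r ^ 0 \<le> mu_ent A r c" by (rule mu_upper)
  then have "A (c 0) \<le> mu_ent A r c" by simp
  then show ?thesis using A_nonneg[of "c 0"] by linarith
qed

lemma mu_attained: assumes "entire A c" "r > 0" shows "\<exists>n. mu_ent A r c = A (c n) * r ^ n"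
proof (cases "\<forall>n. A (c n) * r ^ n = 0")
  case True
  have "mu_ent A r c \<le> 0" by (rule mu_least) (simp add: True)
  then have "mu_ent A r c = 0" using mu_nonneg[OF assms] by simp
  then show ?thesis using True[rule_format, of 0] by (intro exI[of _ 0]) linarith
next
  case False
  let ?t = "\<lambda>n. A (c n) * r ^ n"
  have "\<exists>k. ?t k \<noteq> 0" using False by (simp only: not_all)
  then obtain k where k: "?t k \<noteq> 0" by (elim exE)
  have ge: "0 \<le> ?t k" using assms(2) by simp
  have kpos: "?t k > 0" using le_neq_trans[OF ge k[THEN not_sym]] .
  have lim: "?t \<longlonglongrightarrow> 0" using assms unfolding entire_def by blast
  from lim[THEN order_tendstoD(2), OF kpos] obtain N where N: "\<forall>n\<ge>N. ?t n < ?t k"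
    by (auto simp: eventually_sequentially)
  define m where "m = Max (?t ` {..N})"
  have kN: "k \<le> N"
  proof (rule ccontr)
    assume "\<not> k \<le> N" then show False using N[rule_format, of k] by simp
  qed
  have m_in: "m \<in> ?t ` {..N}" unfolding m_def by (rule Max_in) auto
  have m_ge: "?t n \<le> m" for n
  proof (cases "n \<le> N")
    case True then show ?thesis unfolding m_def by (intro Max_ge) auto
  next
    case False
    then have "?t n < ?t k" using N by simp
    moreover have "?t k \<le> m" unfolding m_def using kN by (intro Max_ge) auto
    ultimately show ?thesis by simp
  qed
  obtain j where j: "m = ?t j" using m_in by blast
  have "mu_ent A r c \<le> m" using m_ge by (rule mu_least)
  moreover have "m \<le> mu_ent A r c" using j mu_upper[OF assms] by simp
  ultimately show ?thesis using j by (intro exI[of _ j]) linarith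
qed

lemma mu_last: assumes "entire A c" "r > 0" "mu_ent A r c > 0"
  shows "\<exists>i. mu_ent A r c = A (c i) * r ^ i \<and> (\<forall>j>i. A (c j) * r ^ j < mu_ent A r c)"
proof -
  let ?t = "\<lambda>n. A (c n) * r ^ n"
  let ?S = "{i. ?t i = mu_ent A r c}"
  have lim: "?t \<longlonglongrightarrow> 0" using assms unfolding entire_def by blast
  from lim[THEN order_tendstoD(2), OF assms(3)] obtain N where N: "\<forall>n\<ge>N. ?t n < mu_ent A r c"
    by (auto simp: eventually_sequentially)
  have fin: "finite ?S"
    by (rule finite_subset[of _ "{..<N}"]) (use N in \<open>auto simp: not_less[symmetric]\<close>)
  have ne: "?S \<noteq> {}" using mu_attained[OF assms(1,2)] by auto
  define i where "i = Max ?S"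
  have iS: "i \<in> ?S" unfolding i_def using fin ne by (rule Max_in)
  have "?t j < mu_ent A r c" if "j > i" for j
  proof -
    have "j \<notin> ?S" using that fin Max_ge i_def by fastforce
    then show ?thesis using mu_upper[OF assms(1,2), of j] by auto
  qed
  then show ?thesis using iS by (intro exI[of _ i]) simp
qed

lemma mu_zero_coeff: assumes "entire A c" "r > 0" "mu_ent A r c = 0" shows "c n = 0"
proof -
  have "A (c n) * r ^ n \<le> 0" using mu_upper[OF assms(1,2), of n] assms(3) by simp
  moreover have "r ^ n > 0" using assms(2) by simp
  ultimately have "A (c n) \<le> 0" using mult_pos_pos[of "A (c n)" "r ^ n"] by linarith
  then show ?thesis using A_nonneg[of "c n"] by simp
qed

lemma mu_pos: assumes "entire A c" "r > 0" "c n \<noteq> 0" shows "mu_ent A r c > 0"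
proof -
  have "mu_ent A r c \<noteq> 0" using mu_zero_coeff[OF assms(1,2)] assms(3) by blast
  then show ?thesis using mu_nonneg[OF assms(1,2)] by simp
qed

lemma cmul_term_bound:
  assumes "\<And>i. A (c i) * r ^ i \<le> Bc" "\<And>j. A (d j) * r ^ j \<le> Bd" "0 \<le> Bc" "0 \<le> Bd" "r > 0"
  shows "A (cmul c d k) * r ^ k \<le> Bc * Bd"
proof -
  have "A (cmul c d k) \<le> Bc * Bd / r ^ k"
    unfolding cmul_def
  proof (rule A_sum_le)
    fix i assume "i \<in> {..k}"
    then have ik: "r ^ k = r ^ i * r ^ (k - i)" by (simp add: power_add[symmetric])
    have "A (c i * d (k - i)) * r ^ k = (A (c i) * r ^ i) * (A (d (k - i)) * r ^ (k - i))"
      by (simp add: ik mult_ac)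
    also have "\<dots> \<le> Bc * Bd" using assms by (intro mult_mono) auto
    finally show "A (c i * d (k - i)) \<le> Bc * Bd / r ^ k" using assms(5) by (simp add: pos_le_divide_eq)
  qed (use assms in simp)
  then show ?thesis using assms(5) by (simp add: pos_le_divide_eq)
qed

lemma entire_cmul: assumes "entire A c" "entire A d" shows "entire A (cmul c d)"
  unfolding entire_bdd
proof (intro allI impI)
  fix r :: real assume r: "r > 0"
  show "\<exists>B. \<forall>k. A (cmul c d k) * r ^ k \<le> B"
    using cmul_term_bound[OF mu_upper[OF assms(1) r] mu_upper[OF assms(2) r]
        mu_nonneg[OF assms(1) r] mu_nonneg[OF assms(2) r] r] by blast
qed

lemma entire_cadd: assumes "entire A c" "entire A d" shows "entire A (cadd c d)"
  unfolding entire_bdd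
proof (intro allI impI)
  fix r :: real assume r: "r > 0"
  have "A (cadd c d k) * r ^ k \<le> max (mu_ent A r c) (mu_ent A r d)" for k
  proof -
    have "A (cadd c d k) * r ^ k \<le> max (A (c k)) (A (d k)) * r ^ k"
      unfolding cadd_def using r by (intro mult_right_mono A_ultra) auto
    also have "\<dots> = max (A (c k) * r ^ k) (A (d k) * r ^ k)" using r by (simp add: max_mult_distrib_right)
    also have "\<dots> \<le> max (mu_ent A r c) (mu_ent A r d)"
      using mu_upper[OF assms(1) r, of k] mu_upper[OF assms(2) r, of k] by auto
    finally show ?thesis .
  qed
  then show "\<exists>B. \<forall>k. A (cadd c d k) * r ^ k \<le> B" by blast
qed

lemma entire_csc: assumes "entire A c" shows "entire A (csc x c)"
  unfolding entire_bdd
proof (intro allI impI)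
  fix r :: real assume r: "r > 0"
  have "A (csc x c k) * r ^ k \<le> A x * mu_ent A r c" for k
    unfolding csc_def using mu_upper[OF assms r, of k] by (simp add: mult.assoc mult_left_mono)
  then show "\<exists>B. \<forall>k. A (csc x c k) * r ^ k \<le> B" by blast
qed

lemma entire_cone: "entire A cone"
  unfolding entire_bdd cone_def by (intro allI impI exI[of _ 1]) auto

lemma entire_trunc: assumes "entire A c" shows "entire A (trunc c N)"
  unfolding entire_bdd
proof (intro allI impI)
  fix r :: real assume r: "r > 0"
  have "A (trunc c N k) * r ^ k \<le> mu_ent A r c" for k
    unfolding trunc_def using mu_upper[OF assms r, of k] mu_nonneg[OF assms r] by auto
  then show "\<exists>B. \<forall>k. A (trunc c N k) * r ^ k \<le> B" by blast
qed

lemma partial_const: fixes x :: "nat \<Rightarrow> 'a"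
  assumes "\<And>k. k \<ge> K \<Longrightarrow> x k = 0" "N \<ge> K" shows "(\<Sum>k<N. x k) = (\<Sum>k<K. x k)"
proof -
  have "(\<Sum>k<N. x k) - (\<Sum>k<K. x k) = (\<Sum>k\<in>{K..<N}. x k)" using partial_diff[OF assms(2)] .
  also have "\<dots> = 0" using assms(1) by (intro sum.neutral) auto
  finally show ?thesis by simp
qed

lemma ev_finite: assumes "\<And>k. k \<ge> K \<Longrightarrow> e k = 0"
  shows "eval_ps A e z = (\<Sum>k<K. e k * z ^ k)"
  unfolding ev_ssum by (rule ssum_eqI, rule conv_eventually_const[of K], intro allI impI partial_const)
    (use assms in auto)

lemma ev_cadd: assumes "entire A c" "entire A d"
  shows "eval_ps A (cadd c d) z = eval_ps A c z + eval_ps A d z"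
proof -
  have "conv_absv A (\<lambda>N. (\<Sum>n<N. c n * z ^ n) + (\<Sum>n<N. d n * z ^ n)) (eval_ps A c z + eval_ps A d z)"
    by (rule conv_add[OF conv_ev[OF assms(1)] conv_ev[OF assms(2)]])
  then have "conv_absv A (\<lambda>N. \<Sum>n<N. cadd c d n * z ^ n) (eval_ps A c z + eval_ps A d z)"
    by (simp add: sum.distrib distrib_right cadd_def)
  then show ?thesis unfolding ev_ssum[of "cadd c d"] by (rule ssum_eqI)
qed

lemma ev_csc: assumes "entire A c"
  shows "eval_ps A (csc x c) z = x * eval_ps A c z"
proof -
  have "conv_absv A (\<lambda>N. x * (\<Sum>n<N. c n * z ^ n)) (x * eval_ps A c z)"
    by (rule conv_cmult[OF conv_ev[OF assms(1)]])
  then have "conv_absv A (\<lambda>N. \<Sum>n<N. csc x c n * z ^ n) (x * eval_ps A c z)"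
    by (simp add: sum_distrib_left mult.assoc csc_def)
  then show ?thesis unfolding ev_ssum[of "csc x c"] by (rule ssum_eqI)
qed

lemma ev_cone: "eval_ps A cone z = 1"
  using ev_finite[of 1 cone z] by (simp add: cone_def)

lemma approx_lemma:
  assumes "entire A e" "\<And>k. A (e k - f k) * A z ^ k \<le> eps" "\<And>k. k \<ge> K \<Longrightarrow> f k = 0"
  shows "A (eval_ps A e z - (\<Sum>k<K. f k * z ^ k)) \<le> eps"
proof -
  have c2: "conv_absv A (\<lambda>N. \<Sum>n<N. f n * z ^ n) (\<Sum>k<K. f k * z ^ k)"
    by (rule conv_eventually_const[of K], intro allI impI partial_const) (use assms(3) in auto)
  have "conv_absv A (\<lambda>N. (\<Sum>n<N. e n * z ^ n) - (\<Sum>n<N. f n * z ^ n))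
        (eval_ps A e z - (\<Sum>k<K. f k * z ^ k))"
    by (rule conv_diff[OF conv_ev[OF assms(1)] c2])
  then have c3: "conv_absv A (\<lambda>N. \<Sum>n<N. (e n - f n) * z ^ n) (eval_ps A e z - (\<Sum>k<K. f k * z ^ k))"
    by (simp add: sum_subtractf left_diff_distrib)
  have "A (eval_ps A e z - (\<Sum>k<K. f k * z ^ k) - (\<Sum>n<0. (e n - f n) * z ^ n)) \<le> eps"
    by (rule tail_bound[OF c3]) (use assms(2) in simp)
  then show ?thesis by simp
qed

lemma mu_bound_le: "entire A c \<Longrightarrow> r > 0 \<Longrightarrow> A z \<le> r \<Longrightarrow> A (c k) * A z ^ k \<le> mu_ent A r c"
  by (rule order_trans[OF _ mu_upper[of c r k]]) (auto intro!: mult_left_mono power_mono)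

lemma eventually_small: assumes "entire A c" "r > 0" "d > 0"
  shows "\<exists>N. \<forall>i\<ge>N. A (c i) * r ^ i \<le> d"
proof -
  have "(\<lambda>n. A (c n) * r ^ n) \<longlonglongrightarrow> 0" using assms unfolding entire_def by blast
  from this[THEN order_tendstoD(2), OF assms(3)] show ?thesis
    by (auto simp: eventually_sequentially intro: less_imp_le)
qed

lemma A_small_eps: "(\<And>e. e > 0 \<Longrightarrow> A x \<le> e) \<Longrightarrow> x = 0"
proof -
  assume "\<And>e. e > 0 \<Longrightarrow> A x \<le> e"
  then have "A x \<le> 0" using le_eps by (metis add_0)
  then show "x = 0" using A_nonneg[of x] by simp
qed

lemma ev_cmul: assumes c: "entire A c" and d: "entire A d"
  shows "eval_ps A (cmul c d) z = eval_ps A c z * eval_ps A d z"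
proof (rule eq_iff_diff_eq_0[THEN iffD2], rule A_small_eps)
  fix eps :: real assume eps: "eps > 0"
  define R where "R = A z + 1"
  have R: "R > 0" "A z \<le> R" unfolding R_def using A_nonneg[of z] by linarith+
  define B where "B = max 1 (max (mu_ent A R c) (mu_ent A R d))"
  have B: "B > 0" "mu_ent A R c \<le> B" "mu_ent A R d \<le> B" unfolding B_def by auto
  define del where "del = eps / B"
  have del: "del > 0" "del * B = eps" unfolding del_def using B eps by auto
  obtain N1 where N1: "\<forall>i\<ge>N1. A (c i) * R ^ i \<le> del" using eventually_small[OF c R(1) del(1)] by blast
  obtain N2 where N2: "\<forall>i\<ge>N2. A (d i) * R ^ i \<le> del" using eventually_small[OF d R(1) del(1)] by blast
  have cm: "conv_absv A (\<lambda>N. (\<Sum>n<N. c n * z ^ n) * (\<Sum>n<N. d n * z ^ n)) (eval_ps A c z * eval_ps A d z)"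
    by (rule conv_mult[OF conv_ev[OF c] conv_ev[OF d]])
  then obtain N3 where N3: "\<forall>n\<ge>N3. A ((\<Sum>n<n. c n * z ^ n) * (\<Sum>n<n. d n * z ^ n) - eval_ps A c z * eval_ps A d z) < eps"
    using eps unfolding conv_absv_def by blast
  define N where "N = max N1 (max N2 N3)"
  let ?f = "cmul (trunc c N) (trunc d N)"
  have bnd: "A (cmul c d k - ?f k) * A z ^ k \<le> eps" for k
  proof -
    have "A (cmul c d k - ?f k) \<le> eps / R ^ k"
      unfolding cmul_def sum_subtractf[symmetric]
    proof (rule A_sum_le)
      fix i assume "i \<in> {..k}"
      then have ik: "R ^ k = R ^ i * R ^ (k - i)" by (simp add: power_add[symmetric])
      show "A (c i * d (k - i) - trunc c N i * trunc d N (k - i)) \<le> eps / R ^ k"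
      proof (cases "i < N \<and> k - i < N")
        case True then show ?thesis using eps R by (simp add: trunc_def)
      next
        case False
        then have eq: "c i * d (k - i) - trunc c N i * trunc d N (k - i) = c i * d (k - i)"
          by (auto simp: trunc_def)
        have "A (c i * d (k - i)) * R ^ k = (A (c i) * R ^ i) * (A (d (k - i)) * R ^ (k - i))"
          by (simp add: ik mult_ac)
        also have "\<dots> \<le> eps"
        proof (cases "i \<ge> N")
          case True
          then have "A (c i) * R ^ i \<le> del" using N1 unfolding N_def by auto
          moreover have "A (d (k - i)) * R ^ (k - i) \<le> B" using mu_upper[OF d R(1)] B by (meson order_trans)
          ultimately have "(A (c i) * R ^ i) * (A (d (k - i)) * R ^ (k - i)) \<le> del * B"
            using R(1) del(1) B(1) by (intro mult_mono) auto
          then show ?thesis using del by simp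
        next
          case False
          then have "k - i \<ge> N" using \<open>\<not> (i < N \<and> k - i < N)\<close> by auto
          then have "A (d (k - i)) * R ^ (k - i) \<le> del" using N2 unfolding N_def by auto
          moreover have "A (c i) * R ^ i \<le> B" using mu_upper[OF c R(1)] B by (meson order_trans)
          ultimately have "(A (c i) * R ^ i) * (A (d (k - i)) * R ^ (k - i)) \<le> B * del"
            using R(1) del(1) B(1) by (intro mult_mono) auto
          then show ?thesis using del by (simp add: mult.commute)
        qed
        finally show ?thesis unfolding eq using R by (simp add: pos_le_divide_eq)
      qed
    qed (use eps R in simp)
    then have "A (cmul c d k - ?f k) * R ^ k \<le> eps" using R by (simp add: pos_le_divide_eq)
    moreover have "A (cmul c d k - ?f k) * A z ^ k \<le> A (cmul c d k - ?f k) * R ^ k"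
      using R by (intro mult_left_mono power_mono) auto
    ultimately show ?thesis by linarith
  qed
  have fz: "?f k = 0" if "k \<ge> 2 * N" for k
    unfolding cmul_def trunc_def using that by (intro sum.neutral) auto
  have 1: "A (eval_ps A (cmul c d) z - (\<Sum>k<2*N. ?f k * z ^ k)) \<le> eps"
    by (rule approx_lemma[OF entire_cmul[OF c d] bnd fz])
  have 2: "A ((\<Sum>k<2*N. ?f k * z ^ k) - eval_ps A c z * eval_ps A d z) \<le> eps"
    unfolding trunc_prod_identity using N3 unfolding N_def by (auto intro: less_imp_le)
  have "eval_ps A (cmul c d) z - eval_ps A c z * eval_ps A d z =
     (eval_ps A (cmul c d) z - (\<Sum>k<2*N. ?f k * z ^ k)) + ((\<Sum>k<2*N. ?f k * z ^ k) - eval_ps A c z * eval_ps A d z)"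
    by simp
  then show "A (eval_ps A (cmul c d) z - eval_ps A c z * eval_ps A d z) \<le> eps"
    using A_add_le[OF 1 2] by simp
qed

section \<open>Affine composition\<close>

definition comp_aff :: "'a \<Rightarrow> 'a \<Rightarrow> (nat \<Rightarrow> 'a) \<Rightarrow> nat \<Rightarrow> 'a" where
  "comp_aff a b c = (\<lambda>k. a ^ k * ssum (\<lambda>n. c n * of_nat (n choose k) * b ^ (n - k)))"

lemma comp_term: assumes "A b \<le> r" "0 \<le> r"
  shows "A (c n * of_nat (n choose k) * b ^ (n - k)) * r ^ k \<le> A (c n) * r ^ n"
proof (cases "n < k")
  case True then show ?thesis using assms by (simp add: binomial_eq_0)
next
  case False
  then have nk: "r ^ n = r ^ (n - k) * r ^ k" by (simp add: power_add[symmetric])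
  have "A (c n * of_nat (n choose k) * b ^ (n - k)) = A (c n) * A (of_nat (n choose k)) * A b ^ (n - k)"
    by simp
  also have "\<dots> \<le> A (c n) * 1 * r ^ (n - k)"
    using A_of_nat[of "n choose k"] assms by (intro mult_mono power_mono) auto
  finally have "A (c n * of_nat (n choose k) * b ^ (n - k)) \<le> A (c n) * r ^ (n - k)" by simp
  then have "A (c n * of_nat (n choose k) * b ^ (n - k)) * r ^ k \<le> A (c n) * r ^ (n - k) * r ^ k"
    using assms by (intro mult_right_mono) auto
  then show ?thesis by (simp add: nk mult.assoc)
qed

lemma comp_term_zero: "n < k \<Longrightarrow> c n * of_nat (n choose k) * b ^ (n - k) = 0"
  by (simp add: binomial_eq_0)

lemma inner_to0: assumes "entire A c"
  shows "(\<lambda>n. A (c n * of_nat (n choose k) * b ^ (n - k))) \<longlonglongrightarrow> 0"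
proof -
  define R where "R = A b + 1"
  have R: "R > 0" "A b \<le> R" unfolding R_def using A_nonneg[of b] by linarith+
  have l: "(\<lambda>n. A (c n) * R ^ n / R ^ k) \<longlonglongrightarrow> 0"
    using assms R unfolding entire_def by (auto intro: tendsto_divide_zero)
  show ?thesis
  proof (rule tendsto_sandwich[OF _ _ tendsto_const l])
    show "\<forall>\<^sub>F n in sequentially. 0 \<le> A (c n * of_nat (n choose k) * b ^ (n - k))" by simp
    show "\<forall>\<^sub>F n in sequentially. A (c n * of_nat (n choose k) * b ^ (n - k)) \<le> A (c n) * R ^ n / R ^ k"
      using comp_term[OF R(2) less_imp_le[OF R(1)]] R(1) by (simp add: pos_le_divide_eq)
  qed
qed

lemma comp_coeff_bound: assumes "entire A c" "A a = 1" "r > 0" "A b \<le> r"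
  shows "A (comp_aff a b c k) * r ^ k \<le> mu_ent A r c"
proof -
  have "A (ssum (\<lambda>n. c n * of_nat (n choose k) * b ^ (n - k))) \<le> mu_ent A r c / r ^ k"
  proof (rule ssum_bound[OF inner_to0[OF assms(1)]])
    fix n
    have "A (c n * of_nat (n choose k) * b ^ (n - k)) * r ^ k \<le> mu_ent A r c"
      using comp_term[OF assms(4), of c n k] assms(3) mu_upper[OF assms(1) assms(3), of n] by linarith
    then show "A (c n * of_nat (n choose k) * b ^ (n - k)) \<le> mu_ent A r c / r ^ k"
      using assms(3) by (simp add: pos_le_divide_eq)
  qed
  then show ?thesis using assms(2,3) by (simp add: comp_aff_def pos_le_divide_eq)
qed

lemma entire_comp: assumes "entire A c" "A a = 1" shows "entire A (comp_aff a b c)"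
  unfolding entire_bdd
proof (intro allI impI)
  fix r :: real assume r: "r > 0"
  define R where "R = r + A b"
  have R: "R > 0" "A b \<le> R" "r \<le> R" unfolding R_def using r A_nonneg[of b] by linarith+
  have "A (comp_aff a b c k) * r ^ k \<le> mu_ent A R c" for k
  proof -
    have "A (comp_aff a b c k) * r ^ k \<le> A (comp_aff a b c k) * R ^ k"
      using r R by (intro mult_left_mono power_mono) auto
    then show ?thesis using comp_coeff_bound[OF assms R(1) R(2), of k] by linarith
  qed
  then show "\<exists>B. \<forall>k. A (comp_aff a b c k) * r ^ k \<le> B" by blast
qed

lemma mu_comp_le: assumes "entire A c" "A a = 1" "r > 0" "A b \<le> r"
  shows "mu_ent A r (comp_aff a b c) \<le> mu_ent A r c"
  by (rule mu_least) (rule comp_coeff_bound[OF assms])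

lemma ev_comp: assumes c: "entire A c" and a: "A a = 1"
  shows "eval_ps A (comp_aff a b c) z = eval_ps A c (a * z + b)"
proof (rule eq_iff_diff_eq_0[THEN iffD2], rule A_small_eps)
  fix eps :: real assume eps: "eps > 0"
  define R where "R = A z + A b + 1"
  have R: "R > 0" "A z \<le> R" "A b \<le> R" unfolding R_def using A_nonneg[of z] A_nonneg[of b] by linarith+
  obtain N1 where N1: "\<forall>i\<ge>N1. A (c i) * R ^ i \<le> eps" using eventually_small[OF c R(1) eps] by blast
  obtain N2 where N2: "\<forall>n\<ge>N2. A ((\<Sum>k<n. c k * (a * z + b) ^ k) - eval_ps A c (a * z + b)) < eps"
    using conv_ev[OF c, of "a * z + b"] eps unfolding conv_absv_def by blast
  define N where "N = max N1 N2"
  let ?x = "\<lambda>k n. c n * of_nat (n choose k) * b ^ (n - k)"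
  define f where "f = (\<lambda>k. if k < N then a ^ k * (\<Sum>n<N. ?x k n) else 0)"
  have termb: "A (?x k n) \<le> eps / R ^ k" if "n \<ge> N \<or> n < k" "n \<ge> k \<longrightarrow> n \<ge> N" for k n
  proof (cases "n < k")
    case True then show ?thesis using eps R by (simp add: binomial_eq_0)
  next
    case False
    then have "n \<ge> N" using that by auto
    then have "A (c n) * R ^ n \<le> eps" using N1 unfolding N_def by auto
    then have "A (?x k n) * R ^ k \<le> eps" using comp_term[OF R(3) less_imp_le[OF R(1)], of c n k] by linarith
    then show ?thesis using R by (simp add: pos_le_divide_eq)
  qed
  have bnd: "A (comp_aff a b c k - f k) * A z ^ k \<le> eps" for k
  proof -
    have "A (comp_aff a b c k - f k) \<le> eps / R ^ k"
    proof (cases "k < N")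
      case True
      have "comp_aff a b c k - f k = a ^ k * (ssum (?x k) - (\<Sum>n<N. ?x k n))"
        using True by (simp add: comp_aff_def f_def right_diff_distrib)
      moreover have "A (ssum (?x k) - (\<Sum>n<N. ?x k n)) \<le> eps / R ^ k"
        by (rule tail_bound[OF conv_ssum[OF inner_to0[OF c]]]) (rule termb, auto)
      ultimately show ?thesis using a by simp
    next
      case False
      have "A (ssum (?x k)) \<le> eps / R ^ k"
        by (rule ssum_bound[OF inner_to0[OF c]]) (rule termb, use False in auto)
      then show ?thesis using False a by (simp add: comp_aff_def f_def)
    qed
    then have "A (comp_aff a b c k - f k) * R ^ k \<le> eps" using R by (simp add: pos_le_divide_eq)
    moreover have "A (comp_aff a b c k - f k) * A z ^ k \<le> A (comp_aff a b c k - f k) * R ^ k"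
      using R by (intro mult_left_mono power_mono) auto
    ultimately show ?thesis by linarith
  qed
  have fz: "f k = 0" if "k \<ge> N" for k using that by (simp add: f_def)
  have 1: "A (eval_ps A (comp_aff a b c) z - (\<Sum>k<N. f k * z ^ k)) \<le> eps"
    by (rule approx_lemma[OF entire_comp[OF c a] bnd fz])
  have fs: "(\<Sum>k<N. f k * z ^ k) = (\<Sum>n<N. c n * (a * z + b) ^ n)"
    unfolding binom_swap[symmetric] f_def by simp
  have 2: "A ((\<Sum>k<N. f k * z ^ k) - eval_ps A c (a * z + b)) \<le> eps"
    unfolding fs using N2 unfolding N_def by (auto intro: less_imp_le)
  have "eval_ps A (comp_aff a b c) z - eval_ps A c (a * z + b) =
     (eval_ps A (comp_aff a b c) z - (\<Sum>k<N. f k * z ^ k)) + ((\<Sum>k<N. f k * z ^ k) - eval_ps A c (a * z + b))"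
    by simp
  then show "A (eval_ps A (comp_aff a b c) z - eval_ps A c (a * z + b)) \<le> eps"
    using A_add_le[OF 1 2] by simp
qed

section \<open>Gauss norm algebra\<close>

lemma A_sum_less: "finite S \<Longrightarrow> T > 0 \<Longrightarrow> (\<And>i. i \<in> S \<Longrightarrow> A (f i) < T) \<Longrightarrow> A (sum f S) < T"
proof (induction S rule: finite_induct)
  case (insert x F)
  have 1: "A (f x) < T" using insert.prems by simp
  have 2: "A (sum f F) < T" using insert.IH insert.prems by simp
  have "A (f x + sum f F) \<le> max (A (f x)) (A (sum f F))" by (rule A_ultra)
  then show ?case using 1 2 insert.hyps by simp
qed simp

lemma mult_less_bound: fixes x y X Y :: real
  assumes "0 \<le> x" "0 \<le> y" "x \<le> X" "y \<le> Y" "x < X \<or> y < Y" "X > 0" "Y > 0"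
  shows "x * y < X * Y"
proof (cases "x < X")
  case True
  have "x * y \<le> x * Y" using assms by (intro mult_left_mono) auto
  also have "\<dots> < X * Y" using True assms by (intro mult_strict_right_mono) auto
  finally show ?thesis .
next
  case False
  then have "y < Y" using assms by auto
  have "x * y \<le> X * y" using assms by (intro mult_right_mono) auto
  also have "\<dots> < X * Y" using \<open>y < Y\<close> assms by (intro mult_strict_left_mono) auto
  finally show ?thesis .
qed

lemma mu_cmul: assumes c: "entire A c" and d: "entire A d" and r: "r > 0"
  shows "mu_ent A r (cmul c d) = mu_ent A r c * mu_ent A r d"
proof (rule antisym)
  show "mu_ent A r (cmul c d) \<le> mu_ent A r c * mu_ent A r d"
    by (rule mu_least, rule cmul_term_bound[OF mu_upper[OF c r] mu_upper[OF d r] mu_nonneg[OF c r] mu_nonneg[OF d r] r])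
  show "mu_ent A r c * mu_ent A r d \<le> mu_ent A r (cmul c d)"
  proof (cases "mu_ent A r c > 0 \<and> mu_ent A r d > 0")
    case False
    have "mu_ent A r c = 0 \<or> mu_ent A r d = 0" using False mu_nonneg[OF c r] mu_nonneg[OF d r]
      by (smt (verit))
    then show ?thesis using mu_nonneg[OF entire_cmul[OF c d] r] by (elim disjE) simp_all
  next
    case True
    obtain i0 where i0': "mu_ent A r c = A (c i0) * r ^ i0 \<and> (\<forall>j>i0. A (c j) * r ^ j < mu_ent A r c)"
      using mu_last[OF c r conjunct1[OF True]] ..
    obtain j0 where j0': "mu_ent A r d = A (d j0) * r ^ j0 \<and> (\<forall>j>j0. A (d j) * r ^ j < mu_ent A r d)"
      using mu_last[OF d r conjunct2[OF True]] ..
    note i0 = conjunct1[OF i0'] conjunct2[OF i0']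
    note j0 = conjunct1[OF j0'] conjunct2[OF j0']
    define k where "k = i0 + j0"
    define T where "T = mu_ent A r c * mu_ent A r d / r ^ k"
    have T: "T > 0" unfolding T_def using True r by simp
    have rk: "r ^ k = r ^ i0 * r ^ j0" by (simp add: k_def power_add)
    have kj: "k - i0 = j0" by (simp add: k_def)
    have "mu_ent A r c * mu_ent A r d = A (c i0 * d (k - i0)) * r ^ k"
      unfolding rk kj i0(1) j0(1) by (simp add: mult_ac)
    then have main: "A (c i0 * d (k - i0)) = T"
      unfolding T_def using r by (simp add: nonzero_eq_divide_eq)
    have rest: "A (\<Sum>i\<in>{..k} - {i0}. c i * d (k - i)) < T"
    proof (rule A_sum_less)
      fix i assume i: "i \<in> {..k} - {i0}"
      then have ik: "r ^ k = r ^ i * r ^ (k - i)" by (simp add: power_add[symmetric])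
      have "A (c i * d (k - i)) * r ^ k = (A (c i) * r ^ i) * (A (d (k - i)) * r ^ (k - i))"
        by (simp add: ik mult_ac)
      also have "\<dots> < mu_ent A r c * mu_ent A r d"
      proof (rule mult_less_bound)
        show "A (c i) * r ^ i \<le> mu_ent A r c" by (rule mu_upper[OF c r])
        show "A (d (k - i)) * r ^ (k - i) \<le> mu_ent A r d" by (rule mu_upper[OF d r])
        show "A (c i) * r ^ i < mu_ent A r c \<or> A (d (k - i)) * r ^ (k - i) < mu_ent A r d"
        proof (cases "i < i0")
          case True then have "k - i > j0" unfolding k_def by simp
          then show ?thesis using j0(2) by blast
        next
          case False then have "i > i0" using i by auto
          then show ?thesis using i0(2) by blast
        qed
      qed (use True r in auto)
      finally show "A (c i * d (k - i)) < T" unfolding T_def using r by (simp add: pos_less_divide_eq)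
    qed (use T in auto)
    have "cmul c d k = c i0 * d (k - i0) + (\<Sum>i\<in>{..k} - {i0}. c i * d (k - i))"
      unfolding cmul_def by (subst sum.remove[of _ i0]) (auto simp: k_def)
    then have "A (cmul c d k) = T" using A_strict[of "\<Sum>i\<in>{..k} - {i0}. c i * d (k - i)" "c i0 * d (k - i0)"]
      rest main by simp
    then have "A (cmul c d k) * r ^ k = mu_ent A r c * mu_ent A r d" unfolding T_def using r by simp
    then show ?thesis using mu_upper[OF entire_cmul[OF c d] r, of k] by simp
  qed
qed

lemma mu_cadd_le: assumes c: "entire A c" and d: "entire A d" and r: "r > 0"
  shows "mu_ent A r (cadd c d) \<le> max (mu_ent A r c) (mu_ent A r d)"
proof (rule mu_least)
  fix k
  have "A (cadd c d k) * r ^ k \<le> max (A (c k)) (A (d k)) * r ^ k"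
    unfolding cadd_def using r by (intro mult_right_mono A_ultra) auto
  also have "\<dots> = max (A (c k) * r ^ k) (A (d k) * r ^ k)" using r by (simp add: max_mult_distrib_right)
  also have "\<dots> \<le> max (mu_ent A r c) (mu_ent A r d)"
    using mu_upper[OF c r, of k] mu_upper[OF d r, of k] by auto
  finally show "A (cadd c d k) * r ^ k \<le> max (mu_ent A r c) (mu_ent A r d)" .
qed

lemma mu_csc_le: assumes c: "entire A c" and r: "r > 0" and x: "A x \<le> 1"
  shows "mu_ent A r (csc x c) \<le> mu_ent A r c"
proof (rule mu_least)
  fix k
  have "A (csc x c k) * r ^ k = A x * (A (c k) * r ^ k)" by (simp add: csc_def mult_ac)
  also have "\<dots> \<le> 1 * (A (c k) * r ^ k)" using x r by (intro mult_right_mono) auto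
  also have "\<dots> \<le> mu_ent A r c" using mu_upper[OF c r] by simp
  finally show "A (csc x c k) * r ^ k \<le> mu_ent A r c" .
qed

lemma mu_cone: assumes r: "r > 0" shows "mu_ent A r cone = 1"
proof (rule antisym)
  show "mu_ent A r cone \<le> 1" by (rule mu_least) (simp add: cone_def)
  show "1 \<le> mu_ent A r cone" using mu_upper[OF entire_cone r, of 0] by (simp add: cone_def)
qed

lemma identity: assumes c: "entire A c" and z: "\<And>z. eval_ps A c z = 0" shows "c n = 0"
proof (rule ccontr)
  assume "c n \<noteq> 0"
  define k where "k = (LEAST n. c n \<noteq> 0)"
  have ck: "c k \<noteq> 0" unfolding k_def by (rule LeastI[of _ n]) fact
  have below: "c i = 0" if "i < k" for i using not_less_Least[of i "\<lambda>n. c n \<noteq> 0"] that unfolding k_def by blast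
  define B0 where "B0 = mu_ent A 1 c"
  have B0: "A (c i) \<le> B0" for i using mu_upper[OF c, of 1 i] unfolding B0_def by simp
  have B0nn: "0 \<le> B0" using B0[of 0] A_nonneg[of "c 0"] by linarith
  obtain t where t: "0 < A t" "A t < 1" using A_small by blast
  have "(\<lambda>j. A t ^ j) \<longlonglongrightarrow> 0" using t by (intro LIMSEQ_power_zero) auto
  then have "(\<lambda>j. B0 * A t ^ j) \<longlonglongrightarrow> 0" by (rule tendsto_mult_right_zero)
  from this[THEN order_tendstoD(2), of "A (c k)"] ck obtain j0 where
    j0: "\<forall>j\<ge>j0. B0 * A t ^ j < A (c k)" by (auto simp: eventually_sequentially)
  define z where "z = t ^ (Suc j0)"
  define s where "s = A z"
  have s1: "0 < s" unfolding s_def z_def using t by simp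
  have s2: "s < 1" unfolding s_def z_def using t power_Suc_less_one[of "A t" j0] by simp
  have s3: "B0 * s < A (c k)" unfolding s_def z_def using j0[rule_format, of "Suc j0"] by simp
  note s = s1 s2 s3
  have sk: "s ^ k > 0" using s by simp
  have tail: "A (eval_ps A c z - (\<Sum>n<Suc k. c n * z ^ n)) \<le> B0 * s * s ^ k"
  proof (rule tail_bound[OF conv_ev[OF c]])
    fix n assume n: "n \<ge> Suc k"
    have "A (c n * z ^ n) = A (c n) * s ^ n" unfolding s_def by simp
    also have "\<dots> \<le> B0 * s ^ n" using B0 s by (intro mult_right_mono) auto
    also have "\<dots> \<le> B0 * s ^ Suc k" using s n B0nn
      by (intro mult_left_mono power_decreasing) auto
    finally show "A (c n * z ^ n) \<le> B0 * s * s ^ k" by (simp add: mult_ac)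
  qed
  have sum: "(\<Sum>n<Suc k. c n * z ^ n) = c k * z ^ k"
    using below by (simp add: sum.neutral)
  have lt: "B0 * s * s ^ k < A (c k * z ^ k)"
    using s sk mult_strict_right_mono[OF s(3) sk] unfolding s_def by simp
  have "A (c k * z ^ k + (eval_ps A c z - c k * z ^ k)) = A (c k * z ^ k)"
    by (rule A_strict) (use tail lt sum in simp)
  moreover have "A (c k * z ^ k) \<noteq> 0" using ck s unfolding s_def by simp
  ultimately have "A (eval_ps A c z) \<noteq> 0" by simp
  then show False using z by simp
qed

lemma series_eq: assumes c: "entire A c" and d: "entire A d" and e: "\<And>z. eval_ps A c z = eval_ps A d z"
  shows "c = d"
proof
  fix n
  have ent: "entire A (cadd c (csc (-1) d))" by (intro entire_cadd entire_csc c d)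
  have "eval_ps A (cadd c (csc (-1) d)) z = 0" for z
    using ev_cadd[OF c entire_csc[OF d]] ev_csc[OF d] e by simp
  then have "cadd c (csc (-1) d) n = 0" by (rule identity[OF ent])
  then show "c n = d n" by (simp add: cadd_def csc_def)
qed

lemma mu_comp_eq: assumes c: "entire A c" and a: "A a = 1" and r: "r > 0" and b: "A b \<le> r"
  shows "mu_ent A r (comp_aff a b c) = mu_ent A r c"
proof (rule antisym)
  show "mu_ent A r (comp_aff a b c) \<le> mu_ent A r c" by (rule mu_comp_le[OF c a r b])
  have a0: "a \<noteq> 0" using a by auto
  define a' where "a' = inverse a"
  define b' where "b' = - b * inverse a"
  have a': "A a' = 1" unfolding a'_def using a by simp
  have b': "A b' \<le> r" unfolding b'_def using a b by simp
  have e1: "entire A (comp_aff a b c)" by (rule entire_comp[OF c a])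
  have "comp_aff a' b' (comp_aff a b c) = c"
  proof (rule series_eq[OF entire_comp[OF e1 a'] c])
    fix z
    have "a * (a' * z + b') + b = z" unfolding a'_def b'_def using a0 by (simp add: field_simps)
    then show "eval_ps A (comp_aff a' b' (comp_aff a b c)) z = eval_ps A c z"
      by (simp add: ev_comp[OF e1 a'] ev_comp[OF c a])
  qed
  then show "mu_ent A r c \<le> mu_ent A r (comp_aff a b c)"
    using mu_comp_le[OF e1 a' r b'] by simp
qed

section \<open>Meromorphic representations\<close>

lemma rep_unique: assumes r: "r > 0" and R1: "mero_rep A F g1 h1" and R2: "mero_rep A F g2 h2"
  shows "mu_ent A r g1 / mu_ent A r h1 = mu_ent A r g2 / mu_ent A r h2"
proof -
  have g1: "entire A g1" and h1: "entire A h1" and g2: "entire A g2" and h2: "entire A h2"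
    using R1 R2 unfolding mero_rep_def by auto
  obtain n1 where n1: "h1 n1 \<noteq> 0" using R1 unfolding mero_rep_def by auto
  obtain n2 where n2: "h2 n2 \<noteq> 0" using R2 unfolding mero_rep_def by auto
  have m1: "mu_ent A r h1 > 0" by (rule mu_pos[OF h1 r n1])
  have m2: "mu_ent A r h2 > 0" by (rule mu_pos[OF h2 r n2])
  define P where "P = cadd (cmul g1 h2) (csc (-1) (cmul g2 h1))"
  have eP: "entire A P" unfolding P_def by (intro entire_cadd entire_csc entire_cmul g1 g2 h1 h2)
  have eH: "entire A (cmul h1 h2)" by (intro entire_cmul h1 h2)
  have evP: "eval_ps A P z = eval_ps A g1 z * eval_ps A h2 z - eval_ps A g2 z * eval_ps A h1 z" for z
  proof -
    have e1: "entire A (cmul g1 h2)" by (rule entire_cmul[OF g1 h2])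
    have e2: "entire A (cmul g2 h1)" by (rule entire_cmul[OF g2 h1])
    have "eval_ps A P z = eval_ps A (cmul g1 h2) z + eval_ps A (csc (-1) (cmul g2 h1)) z"
      unfolding P_def by (rule ev_cadd[OF e1 entire_csc[OF e2]])
    also have "\<dots> = eval_ps A g1 z * eval_ps A h2 z + (-1) * (eval_ps A g2 z * eval_ps A h1 z)"
      unfolding ev_csc[OF e2] ev_cmul[OF g1 h2] ev_cmul[OF g2 h1] ..
    finally show ?thesis by simp
  qed
  have "eval_ps A (cmul P (cmul h1 h2)) z = 0" for z
  proof (cases "eval_ps A h1 z \<noteq> 0 \<and> eval_ps A h2 z \<noteq> 0")
    case True
    then have "F z = eval_ps A g1 z / eval_ps A h1 z" "F z = eval_ps A g2 z / eval_ps A h2 z"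
      using R1 R2 unfolding mero_rep_def by auto
    then have "eval_ps A g1 z * eval_ps A h2 z = eval_ps A g2 z * eval_ps A h1 z"
      using True by (simp add: field_simps)
    then show ?thesis unfolding ev_cmul[OF eP eH] evP by simp
  next
    case False
    then have "eval_ps A h1 z * eval_ps A h2 z = 0" by auto
    then show ?thesis unfolding ev_cmul[OF eP eH] ev_cmul[OF h1 h2] by simp
  qed
  then have z0: "\<And>n. cmul P (cmul h1 h2) n = 0" by (rule identity[OF entire_cmul[OF eP eH]])
  have "mu_ent A r (cmul P (cmul h1 h2)) \<le> 0" by (rule mu_least) (simp add: z0)
  then have "mu_ent A r (cmul P (cmul h1 h2)) = 0"
    using mu_nonneg[OF entire_cmul[OF eP eH] r] by linarith
  then have "mu_ent A r P * (mu_ent A r h1 * mu_ent A r h2) = 0"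
    by (simp add: mu_cmul[OF eP eH r] mu_cmul[OF h1 h2 r])
  then have "mu_ent A r P = 0" using m1 m2 by simp
  then have "P n = 0" for n by (rule mu_zero_coeff[OF eP r])
  then have "cmul g1 h2 = cmul g2 h1" unfolding P_def cadd_def csc_def by (auto intro!: ext)
  then have "mu_ent A r g1 * mu_ent A r h2 = mu_ent A r g2 * mu_ent A r h1"
    using mu_cmul[OF g1 h2 r] mu_cmul[OF g2 h1 r] by simp
  then show ?thesis using m1 m2 by (simp add: field_simps)
qed

lemma mu_mero_eq: assumes r: "r > 0" and R: "mero_rep A F G H"
  shows "mu_mero A r F = mu_ent A r G / mu_ent A r H"
proof -
  have ex: "\<exists>v. \<exists>g h. mero_rep A F g h \<and> v = mu_ent A r g / mu_ent A r h" using R by blast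
  have "\<exists>g h. mero_rep A F g h \<and> mu_mero A r F = mu_ent A r g / mu_ent A r h"
    unfolding mu_mero_def by (rule someI_ex[OF ex])
  then obtain g where "\<exists>h. mero_rep A F g h \<and> mu_mero A r F = mu_ent A r g / mu_ent A r h" ..
  then obtain h where gh: "mero_rep A F g h \<and> mu_mero A r F = mu_ent A r g / mu_ent A r h" ..
  then show ?thesis using rep_unique[OF r conjunct1[OF gh] R] by simp
qed

lemma m_prox_zero: assumes r: "r > 0" and R: "mero_rep A F G H"
  and le: "mu_ent A r G \<le> mu_ent A r H"
  shows "m_prox A r F = 0"
proof -
  have G: "entire A G" and H: "entire A H" using R unfolding mero_rep_def by auto
  obtain n where "H n \<noteq> 0" using R unfolding mero_rep_def by auto
  then have Hp: "mu_ent A r H > 0" by (rule mu_pos[OF H r])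
  define v where "v = mu_ent A r G / mu_ent A r H"
  have v1: "0 \<le> v" unfolding v_def using Hp mu_nonneg[OF G r] by simp
  have v2: "v \<le> 1" unfolding v_def using Hp le by simp
  note v = v1 v2
  have "ln v \<le> 0"
  proof (cases "v = 0")
    case True then show ?thesis by simp
  next
    case False
    have "v > 0" using v1 False by simp
    then show ?thesis using v2 ln_le_zero_iff by blast
  qed
  have "m_prox A r F = max 0 (ln v)" unfolding m_prox_def mu_mero_eq[OF r R] v_def ..
  then show ?thesis using \<open>ln v \<le> 0\<close> by linarith
qed

lemma entire_zero: "entire A (\<lambda>k. 0)"
  unfolding entire_bdd by (intro allI impI exI[of _ 0]) simp

lemma entire_cprod: "(\<And>j. entire A (S j)) \<Longrightarrow> entire A (cprod S n)"
  by (induction n) (auto intro: entire_cmul entire_cone)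

lemma ev_cprod: "(\<And>j. entire A (S j)) \<Longrightarrow> eval_ps A (cprod S n) z = (\<Prod>j<n. eval_ps A (S j) z)"
  by (induction n) (auto simp: ev_cone ev_cmul entire_cprod)

lemma mu_cprod: "(\<And>j. entire A (S j)) \<Longrightarrow> r > 0 \<Longrightarrow> mu_ent A r (cprod S n) = (\<Prod>j<n. mu_ent A r (S j))"
  by (induction n) (auto simp: mu_cone mu_cmul entire_cprod)

lemma entire_csum: "(\<And>j. entire A (S j)) \<Longrightarrow> entire A (csum S n)"
  by (induction n) (auto intro: entire_cadd entire_zero)

lemma ev_csum: "(\<And>j. entire A (S j)) \<Longrightarrow> eval_ps A (csum S n) z = (\<Sum>j<n. eval_ps A (S j) z)"
proof (induction n)
  case 0
  have "eval_ps A (\<lambda>k. 0) z = (\<Sum>k<0. 0 * z ^ k)" by (rule ev_finite) simp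
  then show ?case by simp
next
  case (Suc n)
  have e: "entire A (csum S n)" by (rule entire_csum) (rule Suc.prems)
  have "eval_ps A (csum S (Suc n)) z = eval_ps A (csum S n) z + eval_ps A (S n) z"
    using ev_cadd[OF e Suc.prems] by simp
  then show ?case using Suc.IH[OF Suc.prems] by simp
qed

lemma mu_csum: assumes S: "\<And>j. entire A (S j)" and r: "r > 0" and B: "0 \<le> B"
  shows "(\<forall>j<n. mu_ent A r (S j) \<le> B) \<longrightarrow> mu_ent A r (csum S n) \<le> B"
proof (induction n)
  case 0
  show ?case
  proof
    show "mu_ent A r (csum S 0) \<le> B" by (rule mu_least) (simp add: B)
  qed
next
  case (Suc n)
  show ?case
  proof
    assume h: "\<forall>j<Suc n. mu_ent A r (S j) \<le> B"
    have "mu_ent A r (csum S (Suc n)) \<le> max (mu_ent A r (csum S n)) (mu_ent A r (S n))"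
      unfolding csum.simps by (rule mu_cadd_le[OF entire_csum[OF S] S r])
    moreover have "mu_ent A r (csum S n) \<le> B" using Suc.IH h by simp
    moreover have "mu_ent A r (S n) \<le> B" using h by simp
    ultimately show "mu_ent A r (csum S (Suc n)) \<le> B" by linarith
  qed
qed

lemma mu_pos_ex: assumes "entire A c" "r > 0" "mu_ent A r c > 0" shows "\<exists>n. c n \<noteq> 0"
proof (rule ccontr)
  assume "\<not> (\<exists>n. c n \<noteq> 0)"
  then have "\<And>n. c n = 0" by simp
  then have "mu_ent A r c \<le> 0" by (intro mu_least) simp
  then show False using assms(3) by simp
qed

lemma part1:
  assumes a: "A a = 1" and rb: "A b < r" and g: "entire A g" and h: "entire A h"
    and hn: "\<exists>n. h n \<noteq> 0" and gn: "\<exists>n. g n \<noteq> 0"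
  shows "m_prox A r (\<lambda>z. (eval_ps A g (a * z + b) / eval_ps A h (a * z + b)) / (eval_ps A g z / eval_ps A h z)) = 0"
proof -
  have r: "r > 0" using rb A_nonneg[of b] by linarith
  have rb': "A b \<le> r" using rb by simp
  define G where "G = cmul (comp_aff a b g) h"
  define H where "H = cmul (comp_aff a b h) g"
  have eG: "entire A G" unfolding G_def by (intro entire_cmul entire_comp g h a)
  have eH: "entire A H" unfolding H_def by (intro entire_cmul entire_comp g h a)
  have mh: "mu_ent A r h > 0" using hn mu_pos[OF h r] by blast
  have mg: "mu_ent A r g > 0" using gn mu_pos[OF g r] by blast
  have muG: "mu_ent A r G = mu_ent A r g * mu_ent A r h"
    unfolding G_def by (simp add: mu_cmul entire_comp g h a r mu_comp_eq rb')
  have muH: "mu_ent A r H = mu_ent A r h * mu_ent A r g"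
    unfolding H_def by (simp add: mu_cmul entire_comp g h a r mu_comp_eq rb')
  have evG: "eval_ps A G z = eval_ps A g (a * z + b) * eval_ps A h z" for z
    unfolding G_def by (simp add: ev_cmul[OF entire_comp[OF g a] h] ev_comp[OF g a])
  have evH: "eval_ps A H z = eval_ps A h (a * z + b) * eval_ps A g z" for z
    unfolding H_def by (simp add: ev_cmul[OF entire_comp[OF h a] g] ev_comp[OF h a])
  have rep: "mero_rep A (\<lambda>z. (eval_ps A g (a * z + b) / eval_ps A h (a * z + b)) / (eval_ps A g z / eval_ps A h z)) G H"
    unfolding mero_rep_def
  proof (intro conjI allI impI eG eH)
    show "\<exists>n. H n \<noteq> 0" using mu_pos_ex[OF eH r] muH mh mg by simp
    fix z assume nz: "eval_ps A H z \<noteq> 0"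
    then have n1: "eval_ps A h (a * z + b) \<noteq> 0" "eval_ps A g z \<noteq> 0" unfolding evH by auto
    show "eval_ps A g (a * z + b) / eval_ps A h (a * z + b) / (eval_ps A g z / eval_ps A h z) =
          eval_ps A G z / eval_ps A H z"
    proof (cases "eval_ps A h z = 0")
      case True then show ?thesis unfolding evG evH by simp
    next
      case False then show ?thesis unfolding evG evH using n1 by (simp add: field_simps)
    qed
  qed
  show ?thesis by (rule m_prox_zero[OF r rep]) (simp add: muG muH mult.commute)
qed

lemma part2:
  assumes a: "A a = 1" and rb: "A b < r" and g: "entire A g" and h: "entire A h"
    and hn: "\<exists>n. h n \<noteq> 0" and gn: "\<exists>n. g n \<noteq> 0"
  shows "m_prox A r (\<lambda>z. (delta_L (\<lambda>z. a * z + b) ^^ m) (\<lambda>z. eval_ps A g z / eval_ps A h z) z /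
                         (eval_ps A g z / eval_ps A h z)) = 0"
proof -
  define L where "L = (\<lambda>z. a * z + b)"
  define f where "f = (\<lambda>z. eval_ps A g z / eval_ps A h z)"
  have r: "r > 0" using rb A_nonneg[of b] by linarith
  obtain w :: "nat \<Rightarrow> int" where w: "\<forall>z. (delta_L L ^^ m) f z = (\<Sum>k\<le>m. of_int (w k) * f ((L ^^ k) z))"
    using delta_pow by blast
  define bk where "bk = (\<lambda>k. (\<Sum>j<k. a ^ j) * b)"
  have ak: "A (a ^ k) = 1" for k using a by simp
  have bk: "A (bk k) \<le> r" for k
  proof -
    have "A (\<Sum>j<k. a ^ j) \<le> 1" by (rule A_sum_le) (use a in simp)+
    then have "A (\<Sum>j<k. a ^ j) * A b \<le> 1 * A b" by (rule mult_right_mono) (rule A_nonneg)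
    then show ?thesis using rb unfolding bk_def by simp
  qed
  have Lk: "(L ^^ k) z = a ^ k * z + bk k" for k z unfolding L_def bk_def by (rule L_pow)
  define Hk where "Hk = (\<lambda>k. comp_aff (a ^ k) (bk k) h)"
  define Gk where "Gk = (\<lambda>k. comp_aff (a ^ k) (bk k) g)"
  have eHk: "entire A (Hk k)" for k unfolding Hk_def by (rule entire_comp[OF h ak])
  have eGk: "entire A (Gk k)" for k unfolding Gk_def by (rule entire_comp[OF g ak])
  have evHk: "eval_ps A (Hk k) z = eval_ps A h ((L ^^ k) z)" for k z
    unfolding Hk_def Lk by (rule ev_comp[OF h ak])
  have evGk: "eval_ps A (Gk k) z = eval_ps A g ((L ^^ k) z)" for k z
    unfolding Gk_def Lk by (rule ev_comp[OF g ak])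
  have muHk: "mu_ent A r (Hk k) = mu_ent A r h" for k
    unfolding Hk_def by (rule mu_comp_eq[OF h ak r bk])
  have muGk: "mu_ent A r (Gk k) = mu_ent A r g" for k
    unfolding Gk_def by (rule mu_comp_eq[OF g ak r bk])
  define Sx where "Sx = (\<lambda>k j. if j = k then cone else Hk j)"
  have eSx: "entire A (Sx k j)" for k j unfolding Sx_def using eHk entire_cone by simp
  have evSx: "eval_ps A (Sx k j) z = (if j = k then 1 else eval_ps A h ((L ^^ j) z))" for k j z
    unfolding Sx_def using evHk ev_cone by simp
  have muSx: "mu_ent A r (Sx k j) = (if j = k then 1 else mu_ent A r h)" for k j
    unfolding Sx_def using muHk mu_cone[OF r] by simp
  define T where "T = (\<lambda>k. csc (of_int (w k)) (cmul (cmul (Gk k) (cprod (Sx k) (Suc m))) h))"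
  have eT: "entire A (T k)" for k
    unfolding T_def by (intro entire_csc entire_cmul eGk entire_cprod eSx h)
  define N where "N = csum T (Suc m)"
  define D where "D = cmul (cprod Hk (Suc m)) g"
  have eN: "entire A N" unfolding N_def by (intro entire_csum eT)
  have eD: "entire A D" unfolding D_def by (intro entire_cmul entire_cprod eHk g)
  have mh: "mu_ent A r h > 0" using hn mu_pos[OF h r] by blast
  have mg: "mu_ent A r g > 0" using gn mu_pos[OF g r] by blast
  have muD: "mu_ent A r D = mu_ent A r h ^ Suc m * mu_ent A r g"
    unfolding D_def mu_cmul[OF entire_cprod[OF eHk] g r] mu_cprod[OF eHk r] muHk by simp
  have muT: "mu_ent A r (T k) \<le> mu_ent A r g * mu_ent A r h ^ Suc m" if "k < Suc m" for k
  proof -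
    have "mu_ent A r (T k) \<le> mu_ent A r (cmul (cmul (Gk k) (cprod (Sx k) (Suc m))) h)"
      unfolding T_def by (rule mu_csc_le[OF entire_cmul[OF entire_cmul[OF eGk entire_cprod[OF eSx]] h] r A_of_int])
    also have "\<dots> = mu_ent A r g * ((\<Prod>j<Suc m. if j = k then 1 else mu_ent A r h) * mu_ent A r h)"
      unfolding mu_cmul[OF entire_cmul[OF eGk entire_cprod[OF eSx]] h r]
          mu_cmul[OF eGk entire_cprod[OF eSx] r] mu_cprod[OF eSx r] muSx muGk by (simp add: mult_ac)
    also have "\<dots> = mu_ent A r g * mu_ent A r h ^ Suc m"
      using prod_if_const[of k m "mu_ent A r h"] that by simp
    finally show ?thesis .
  qed
  have muN: "mu_ent A r N \<le> mu_ent A r g * mu_ent A r h ^ Suc m"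
  proof -
    have B0: "0 \<le> mu_ent A r g * mu_ent A r h ^ Suc m" using mh mg by simp
    have "(\<forall>j<Suc m. mu_ent A r (T j) \<le> mu_ent A r g * mu_ent A r h ^ Suc m) \<longrightarrow>
       mu_ent A r (csum T (Suc m)) \<le> mu_ent A r g * mu_ent A r h ^ Suc m"
      by (rule mu_csum[where S=T, OF eT r B0])
    moreover have "\<forall>j<Suc m. mu_ent A r (T j) \<le> mu_ent A r g * mu_ent A r h ^ Suc m" using muT by blast
    ultimately show ?thesis unfolding N_def by (rule mp)
  qed
  have evD: "eval_ps A D z = (\<Prod>j<Suc m. eval_ps A h ((L ^^ j) z)) * eval_ps A g z" for z
    unfolding D_def ev_cmul[OF entire_cprod[OF eHk] g] ev_cprod[OF eHk] evHk by simp
  have evN: "eval_ps A N z = (\<Sum>k<Suc m. of_int (w k) * (eval_ps A g ((L ^^ k) z) *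
      (\<Prod>j<Suc m. if j = k then 1 else eval_ps A h ((L ^^ j) z)) * eval_ps A h z))" for z
  proof -
    have "eval_ps A N z = (\<Sum>k<Suc m. eval_ps A (T k) z)" unfolding N_def by (rule ev_csum[OF eT])
    also have "\<dots> = (\<Sum>k<Suc m. of_int (w k) * (eval_ps A g ((L ^^ k) z) *
      (\<Prod>j<Suc m. if j = k then 1 else eval_ps A h ((L ^^ j) z)) * eval_ps A h z))"
    proof (rule sum.cong[OF refl])
      fix k
      show "eval_ps A (T k) z = of_int (w k) * (eval_ps A g ((L ^^ k) z) *
        (\<Prod>j<Suc m. if j = k then 1 else eval_ps A h ((L ^^ j) z)) * eval_ps A h z)"
        unfolding T_def ev_csc[OF entire_cmul[OF entire_cmul[OF eGk entire_cprod[OF eSx]] h]]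
          ev_cmul[OF entire_cmul[OF eGk entire_cprod[OF eSx]] h] ev_cmul[OF eGk entire_cprod[OF eSx]]
          ev_cprod[OF eSx] evSx evGk by simp
    qed
    finally show ?thesis .
  qed
  have rep: "mero_rep A (\<lambda>z. (delta_L L ^^ m) f z / f z) N D"
    unfolding mero_rep_def
  proof (intro conjI allI impI eN eD)
    show "\<exists>n. D n \<noteq> 0" using mu_pos_ex[OF eD r] muD mh mg by simp
    fix z assume nz: "eval_ps A D z \<noteq> 0"
    define P where "P = (\<Prod>j<Suc m. eval_ps A h ((L ^^ j) z))"
    define hj where "hj = (\<lambda>j. eval_ps A h ((L ^^ j) z))"
    define gj where "gj = (\<lambda>j. eval_ps A g ((L ^^ j) z))"
    have P0: "P \<noteq> 0" and g0: "eval_ps A g z \<noteq> 0" using nz unfolding evD P_def by auto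
    have hj0: "hj j \<noteq> 0" if "j < Suc m" for j
    proof
      assume "hj j = 0"
      then have "P = 0" unfolding P_def hj_def by (intro prod_zero) (use that in auto)
      then show False using P0 by simp
    qed
    have h0: "eval_ps A h z \<noteq> 0" using hj0[of 0] unfolding hj_def by simp
    have "eval_ps A N z = (\<Sum>k<Suc m. of_int (w k) * (gj k * (P / hj k) * eval_ps A h z))"
      unfolding evN
    proof (rule sum.cong[OF refl])
      fix k assume k: "k \<in> {..<Suc m}"
      have "(\<Prod>j<Suc m. if j = k then 1 else eval_ps A h ((L ^^ j) z)) = P / hj k"
        unfolding P_def hj_def by (rule prod_if_one) (use k hj0[of k] hj_def in auto)
      then show "of_int (w k) * (eval_ps A g ((L ^^ k) z) * (\<Prod>j<Suc m. if j = k then 1 else eval_ps A h ((L ^^ j) z)) * eval_ps A h z)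
        = of_int (w k) * (gj k * (P / hj k) * eval_ps A h z)" unfolding gj_def by simp
    qed
    also have "\<dots> = P * eval_ps A h z * (\<Sum>k<Suc m. of_int (w k) * (gj k / hj k))"
      unfolding sum_distrib_left by (rule sum.cong[OF refl]) (simp add: divide_inverse mult_ac)
    finally have eN': "eval_ps A N z = P * eval_ps A h z * (\<Sum>k<Suc m. of_int (w k) * (gj k / hj k))" .
    have eD': "eval_ps A D z = P * eval_ps A g z" unfolding evD P_def ..
    have dl: "(delta_L L ^^ m) f z = (\<Sum>k<Suc m. of_int (w k) * (gj k / hj k))"
      using w unfolding f_def gj_def hj_def by (simp add: lessThan_Suc_atMost)
    show "(delta_L L ^^ m) f z / f z = eval_ps A N z / eval_ps A D z"
    proof -
      have fz: "f z = eval_ps A g z / eval_ps A h z" unfolding f_def ..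
      define S where "S = (\<Sum>k<Suc m. of_int (w k) * (gj k / hj k))"
      show ?thesis unfolding eN' eD' dl fz S_def[symmetric] using P0 g0 h0 by (simp add: field_simps)
    qed
  qed
  have "m_prox A r (\<lambda>z. (delta_L L ^^ m) f z / f z) = 0"
    by (rule m_prox_zero[OF r rep]) (rule order_trans[OF muN], simp add: muD mult.commute)
  then show ?thesis unfolding L_def f_def .
qed

end

theorem corollary2p4:
  fixes absv :: "'a::field_char_0 \<Rightarrow> real"
    and a b :: 'a and g h :: "nat \<Rightarrow> 'a" and m :: nat and r :: real
  assumes "kappa_field absv"
    and "absv a = 1"
    and "entire absv g" and "entire absv h"
    and "\<exists>n. h n \<noteq> 0" and "\<exists>n. g n \<noteq> 0"
    and "m \<ge> 1"
    and "r > absv b"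
  shows "let L = (\<lambda>z. a * z + b); f = (\<lambda>z. eval_ps absv g z / eval_ps absv h z) in
           m_prox absv r (\<lambda>z. f (L z) / f z) = 0 \<and>
           m_prox absv r (\<lambda>z. ((delta_L L ^^ m) f) z / f z) = 0"
proof -
  interpret NA absv
    using assms(1) unfolding kappa_field_def by unfold_locales auto
  have 1: "m_prox absv r (\<lambda>z. (eval_ps absv g (a * z + b) / eval_ps absv h (a * z + b)) / (eval_ps absv g z / eval_ps absv h z)) = 0"
    by (rule part1) (use assms in auto)
  have 2: "m_prox absv r (\<lambda>z. (delta_L (\<lambda>z. a * z + b) ^^ m) (\<lambda>z. eval_ps absv g z / eval_ps absv h z) z /
                         (eval_ps absv g z / eval_ps absv h z)) = 0"
    by (rule part2) (use assms in auto)
  show ?thesis unfolding Let_def using 1 2 by simp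
qed

end
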